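(* Let $n\ge3$. For every $\Gamma_1=([n],Q_1),\Gamma_2=([n],Q_2)\in\mathcal{S}_n$, $$d_4(\Gamma_1,\Gamma_2)=|Q_1\Delta Q_2|-\frac{2}{n+1}A(\Gamma_1\cup\Gamma_2)=|Q_1\Delta Q_2|-\frac{2}{n+1}\bigl(|Q_1\Delta Q_2|-\Lambda_{\ge2}\bigr).$$
   Context: For $n\ge1$ let $[n]=\{1,\dots,n\}$. A contact structure of length $n$ is a simple undirected graph $\Gamma=([n],Q)$ (no self-loops, no multiple edges) such that $\{i,i+1\}\notin Q$ for every $i$; its edges are called contacts, written $i\cdot j$. It is an RNA secondary structure if every node belongs to at most one contact; $\mathcal{S}_n$ is the set of these. $\Gamma_1\cup\Gamma_2=([n],Q_1\cup Q_2)$. $A(\Gamma)$ is the number of unordered pairs $\{i\cdot j,j\cdot k\}$ of distinct contacts of $\Gamma$ sharing a node ($i\neq k$). Orbits: for $\Gamma_1,\Gamma_2\in\mathcal{S}_n$ the orbits are the vertex sets of the connected components of the graph $([n],Q_1\cup Q_2)$; the length of an orbit is its number of nodes. An orbit is cyclic if either it has 2 nodes and its contact lies in $Q_1\cap Q_2$, or it has $m\ge3$ nodes that can be listed $i_1,\dots,i_m$ with $i_1\cdot i_2,\dots,i_{m-1}\cdot i_m,i_m\cdot i_1\in Q_1\cup Q_2$; otherwise it is linear. $\Lambda^{(m)}$ is the number of linear orbits of length $m$, $\Lambda_{\ge k}=\sum_{m\ge k}\Lambda^{(m)}$. $\mathbb{F}_2=\mathbb{Z}/2\mathbb{Z}$;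 the edge ideal $I_\Gamma$ is the ideal of $\mathbb{F}_2[x_1,\dots,x_n]$ generated by $\{x_ix_j:i\cdot j\in Q\}$. For $m\ge3$, $R_{n,m}=\mathbb{F}_2[x_1,\dots,x_n]/\langle\text{all monomials of total degree }m\rangle$, $\pi_m$ the quotient map, $d'_m(\Gamma_1,\Gamma_2)=\log_2\bigl|(\pi_m(I_{\Gamma_1})+\pi_m(I_{\Gamma_2}))/(\pi_m(I_{\Gamma_1})\cap\pi_m(I_{\Gamma_2}))\bigr|$ (cardinality of a quotient of additive groups), and $d_m=d'_m/\binom{n+m-3}{n}$; $d_4=d'_4/(n+1)$. $\Delta$ denotes symmetric difference. *)

theory Defs
  imports Complex_Main "HOL-Library.Poly_Mapping" "HOL-Library.Z2" "HOL-Library.Set_Algebras"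
begin

definition contact_structure :: "nat \<Rightarrow> nat set set \<Rightarrow> bool" where
  "contact_structure n Q \<longleftrightarrow>
     (\<forall>e\<in>Q. e \<subseteq> {1..n} \<and> card e = 2) \<and> (\<forall>i. {i, i+1} \<notin> Q)"

definition secondary_structure :: "nat \<Rightarrow> nat set set \<Rightarrow> bool" where
  "secondary_structure n Q \<longleftrightarrow> contact_structure n Q \<and>
     (\<forall>e\<in>Q. \<forall>f\<in>Q. e \<inter> f \<noteq> {} \<longrightarrow> e = f)"

definition symdiff :: "'a set \<Rightarrow> 'a set \<Rightarrow> 'a set" where
  "symdiff A B = (A - B) \<union> (B - A)"

definition A_count :: "nat set set \<Rightarrow> nat" where
  "A_count Q = card {{e, f} | e f. e \<in> Q \<and> f \<in> Q \<and> e \<noteq> f \<and> e \<inter> f \<noteq> {}}"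

definition adj_rel :: "nat set set \<Rightarrow> (nat \<times> nat) set" where
  "adj_rel Q = {(i, j). {i, j} \<in> Q}"

definition orbits :: "nat \<Rightarrow> nat set set \<Rightarrow> nat set set \<Rightarrow> nat set set" where
  "orbits n Q1 Q2 =
     {{j \<in> {1..n}. (i, j) \<in> (adj_rel (Q1 \<union> Q2))\<^sup>*} | i. i \<in> {1..n}}"

definition cyclic_orbit :: "nat set set \<Rightarrow> nat set set \<Rightarrow> nat set \<Rightarrow> bool" where
  "cyclic_orbit Q1 Q2 Ob \<longleftrightarrow>
     (card Ob = 2 \<and> Ob \<in> Q1 \<inter> Q2) \<or>
     (card Ob \<ge> 3 \<and> (\<exists>xs. distinct xs \<and> set xs = Ob \<and>
        (\<forall>k < length xs. {xs ! k, xs ! ((k + 1) mod length xs)} \<in> Q1 \<union> Q2)))"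

definition Lambda :: "nat \<Rightarrow> nat set set \<Rightarrow> nat set set \<Rightarrow> nat \<Rightarrow> nat" where
  "Lambda n Q1 Q2 m = card {Ob \<in> orbits n Q1 Q2. card Ob = m \<and> \<not> cyclic_orbit Q1 Q2 Ob}"

definition Lambda_ge :: "nat \<Rightarrow> nat set set \<Rightarrow> nat set set \<Rightarrow> nat \<Rightarrow> nat" where
  "Lambda_ge n Q1 Q2 k = (\<Sum>m\<in>{k..n}. Lambda n Q1 Q2 m)"

text \<open>Polynomials in countably many variables over F_2 = bit; monomials are
  exponent vectors (finitely supported nat-valued functions). F_2[x_1..x_n] is the subring of those
  involving only the variables 1..n.\<close>
type_synonym f2poly = "(nat \<Rightarrow>\<^sub>0 nat) \<Rightarrow>\<^sub>0 bit"

definition polys :: "nat \<Rightarrow> f2poly set" where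
  "polys n = {p. \<forall>mon \<in> Poly_Mapping.keys p. Poly_Mapping.keys mon \<subseteq> {1..n}}"

inductive_set ideal_gen :: "nat \<Rightarrow> f2poly set \<Rightarrow> f2poly set" for n G where
  zero: "0 \<in> ideal_gen n G"
| add: "a \<in> ideal_gen n G \<Longrightarrow> b \<in> ideal_gen n G \<Longrightarrow> a + b \<in> ideal_gen n G"
| mult: "r \<in> polys n \<Longrightarrow> g \<in> G \<Longrightarrow> r * g \<in> ideal_gen n G"

definition var_mon :: "nat \<Rightarrow> f2poly" where
  "var_mon i = Poly_Mapping.single (Poly_Mapping.single i 1) 1"

definition edge_ideal :: "nat \<Rightarrow> nat set set \<Rightarrow> f2poly set" where
  "edge_ideal n Q = ideal_gen n {var_mon i * var_mon j | i j. {i, j} \<in> Q}"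

definition total_degree :: "(nat \<Rightarrow>\<^sub>0 nat) \<Rightarrow> nat" where
  "total_degree mon = (\<Sum>i\<in>Poly_Mapping.keys mon. Poly_Mapping.lookup mon i)"

definition deg_ideal :: "nat \<Rightarrow> nat \<Rightarrow> f2poly set" where
  "deg_ideal n m = ideal_gen n
     {Poly_Mapping.single mon 1 | mon. Poly_Mapping.keys mon \<subseteq> {1..n} \<and> total_degree mon = m}"

text \<open>Quotient map pi_m : F_2[x_1..x_n] \<rightarrow> R_{n,m}; elements of R_{n,m} are cosets.
  Addition of cosets is the set addition from Set_Algebras.\<close>
definition pi_map :: "nat \<Rightarrow> nat \<Rightarrow> f2poly \<Rightarrow> f2poly set" where
  "pi_map n m p = p +o deg_ideal n m"

definition quot_card :: "'a::plus set \<Rightarrow> 'a set \<Rightarrow> nat" where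
  "quot_card S T = card ((\<lambda>x. x +o T) ` S)"

definition d'_m :: "nat \<Rightarrow> nat \<Rightarrow> nat set set \<Rightarrow> nat set set \<Rightarrow> real" where
  "d'_m n m Q1 Q2 =
     (let P1 = pi_map n m ` edge_ideal n Q1; P2 = pi_map n m ` edge_ideal n Q2
      in log 2 (real (quot_card (P1 + P2) (P1 \<inter> P2))))"

definition d_m :: "nat \<Rightarrow> nat \<Rightarrow> nat set set \<Rightarrow> nat set set \<Rightarrow> real" where
  "d_m n m Q1 Q2 = d'_m n m Q1 Q2 / real ((n + m - 3) choose n)"

end

theory Submission
  imports Defs
begin

lemma bit_add_self[simp]: "(a::bit) + a = 0"
  by (cases a) (simp_all add: one_add_one)

lemma f2_add_self[simp]: "(p::f2poly) + p = 0"
  by (rule poly_mapping_eqI) (simp only: lookup_add bit_add_self lookup_zero)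

definition ind :: "(nat \<Rightarrow>\<^sub>0 nat) set \<Rightarrow> f2poly" where
  "ind X = (\<Sum>m\<in>X. Poly_Mapping.single m 1)"

lemma lookup_ind: "finite X \<Longrightarrow> Poly_Mapping.lookup (ind X) m = (if m \<in> X then 1 else 0)"
  unfolding ind_def by (simp add: lookup_sum lookup_single when_def)

lemma keys_ind[simp]: "finite X \<Longrightarrow> Poly_Mapping.keys (ind X) = X"
  by (auto simp: in_keys_iff lookup_ind split: if_splits)

lemma ind_keys[simp]: "ind (Poly_Mapping.keys (p::f2poly)) = p"
  by (rule poly_mapping_eqI) (auto simp: lookup_ind in_keys_iff)

lemma ind_add: "finite X \<Longrightarrow> finite Y \<Longrightarrow> ind X + ind Y = ind (symdiff X Y)"
  by (rule poly_mapping_eqI) (auto simp: lookup_ind lookup_add symdiff_def)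

lemma keys_add_f2: "Poly_Mapping.keys ((p::f2poly) + q) = symdiff (Poly_Mapping.keys p) (Poly_Mapping.keys q)"
proof -
  have "p + q = ind (symdiff (Poly_Mapping.keys p) (Poly_Mapping.keys q))"
    using ind_add[of "Poly_Mapping.keys p" "Poly_Mapping.keys q"] by simp
  then show ?thesis by (simp add: symdiff_def)
qed

lemma td_sum: "finite S \<Longrightarrow> Poly_Mapping.keys m \<subseteq> S \<Longrightarrow> total_degree m = sum (Poly_Mapping.lookup m) S"
  unfolding total_degree_def
  by (rule sum.mono_neutral_left) (auto simp: in_keys_iff)

lemma td_add: "total_degree (a + b) = total_degree a + total_degree b"
proof -
  let ?S = "Poly_Mapping.keys a \<union> Poly_Mapping.keys b"
  have "total_degree (a + b) = sum (Poly_Mapping.lookup (a+b)) ?S"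
    by (rule td_sum) (auto dest: set_mp[OF keys_add])
  also have "\<dots> = sum (Poly_Mapping.lookup a) ?S + sum (Poly_Mapping.lookup b) ?S"
    by (simp add: lookup_add sum.distrib)
  also have "\<dots> = total_degree a + total_degree b"
    using td_sum[of ?S a] td_sum[of ?S b] by auto
  finally show ?thesis .
qed

lemma td_single[simp]: "total_degree (Poly_Mapping.single k c) = c"
  unfolding total_degree_def by simp

lemma td_zero[simp]: "total_degree 0 = 0"
  unfolding total_degree_def by simp

lemma td_eq0: "total_degree m = 0 \<Longrightarrow> m = 0"
  unfolding total_degree_def
  by (rule poly_mapping_eqI) (auto simp: in_keys_iff)

lemma td_eq1: "total_degree m = 1 \<Longrightarrow> \<exists>k. m = Poly_Mapping.single k 1"
proof -
  assume h: "total_degree m = 1"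
  then have "m \<noteq> 0" by auto
  then obtain k where k: "k \<in> Poly_Mapping.keys m" by (metis keys_eq_empty ex_in_conv)
  have "Poly_Mapping.lookup m k + sum (Poly_Mapping.lookup m) (Poly_Mapping.keys m - {k}) = 1"
    using h k unfolding total_degree_def by (simp add: sum.remove)
  moreover have "Poly_Mapping.lookup m k > 0" using k by (simp add: in_keys_iff)
  ultimately have a: "Poly_Mapping.lookup m k = 1" and b: "sum (Poly_Mapping.lookup m) (Poly_Mapping.keys m - {k}) = 0"
    by linarith+
  have "\<forall>i\<in>Poly_Mapping.keys m - {k}. Poly_Mapping.lookup m i = 0" using b by simp
  then have "\<forall>i. i \<noteq> k \<longrightarrow> Poly_Mapping.lookup m i = 0" by (auto simp: in_keys_iff)
  then have "m = Poly_Mapping.single k 1"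
    by (intro poly_mapping_eqI) (auto simp: lookup_single a when_def)
  then show ?thesis by blast
qed

lemma keys_add_nat: "Poly_Mapping.keys ((a::nat \<Rightarrow>\<^sub>0 nat) + b) = Poly_Mapping.keys a \<union> Poly_Mapping.keys b"
  by (auto simp: in_keys_iff lookup_add)

lemma sub_mon_exists:
  "k \<le> total_degree m \<Longrightarrow> \<exists>d. (\<forall>i. Poly_Mapping.lookup d i \<le> Poly_Mapping.lookup m i) \<and> total_degree d = k"
proof (induction k)
  case 0
  then show ?case by (intro exI[of _ 0]) simp
next
  case (Suc k)
  then obtain d where d: "\<forall>i. Poly_Mapping.lookup d i \<le> Poly_Mapping.lookup m i" "total_degree d = k" by auto
  then have "d \<noteq> m" using Suc.prems by auto
  then obtain i where i: "Poly_Mapping.lookup d i \<noteq> Poly_Mapping.lookup m i"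
    by (metis poly_mapping_eqI)
  with d have lt: "Poly_Mapping.lookup d i < Poly_Mapping.lookup m i" using le_neq_implies_less by blast
  show ?case
  proof (intro exI[of _ "d + Poly_Mapping.single i 1"] conjI allI)
    fix j show "Poly_Mapping.lookup (d + Poly_Mapping.single i 1) j \<le> Poly_Mapping.lookup m j"
      using d(1) lt by (auto simp: lookup_add lookup_single when_def)
  next
    show "total_degree (d + Poly_Mapping.single i 1) = Suc k" by (simp add: td_add d(2))
  qed
qed

lemma bit_one_neq0[simp]: "(1::bit) \<noteq> 0" "(0::bit) \<noteq> 1"
  by simp_all

lemma ideal_gen_sum:
  "finite S \<Longrightarrow> (\<And>x. x \<in> S \<Longrightarrow> f x \<in> ideal_gen n G) \<Longrightarrow> sum f S \<in> ideal_gen n G"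
  by (induction S rule: finite_induct) (auto intro: ideal_gen.intros)

lemma ideal_gen_keys:
  assumes "\<And>g m. g \<in> G \<Longrightarrow> m \<in> Poly_Mapping.keys g \<Longrightarrow> P m"
    and "\<And>a m. Poly_Mapping.keys a \<subseteq> {1..n} \<Longrightarrow> P m \<Longrightarrow> P (a + m)"
    and "x \<in> ideal_gen n G"
  shows "\<forall>m\<in>Poly_Mapping.keys x. P m"
  using assms(3)
proof (induction rule: ideal_gen.induct)
  case zero
  then show ?case by simp
next
  case (add a b)
  then show ?case using keys_add[of a b] by blast
next
  case (mult r g)
  show ?case
  proof
    fix m assume "m \<in> Poly_Mapping.keys (r * g)"
    then obtain a b where ab: "m = a + b" "a \<in> Poly_Mapping.keys r" "b \<in> Poly_Mapping.keys g"
      using keys_mult[of r g] by blast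
    have "Poly_Mapping.keys a \<subseteq> {1..n}" using mult.hyps(1) ab(2) unfolding polys_def by blast
    moreover have "P b" using assms(1) mult.hyps(2) ab(3) by blast
    ultimately show "P m" using assms(2) ab(1) by blast
  qed
qed

lemma polys_add: "p \<in> polys n \<Longrightarrow> q \<in> polys n \<Longrightarrow> p + q \<in> polys n"
  unfolding polys_def by (auto simp: keys_add_f2 symdiff_def)

lemma ideal_gen_polys:
  assumes "G \<subseteq> polys n" "x \<in> ideal_gen n G" shows "x \<in> polys n"
proof -
  have "\<forall>m\<in>Poly_Mapping.keys x. Poly_Mapping.keys m \<subseteq> {1..n}"
    by (rule ideal_gen_keys[OF _ _ assms(2)]) (use assms(1) in \<open>auto simp: polys_def keys_add_nat\<close>)
  then show ?thesis unfolding polys_def by blast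
qed

lemma f2_sum_single: "(p::f2poly) = (\<Sum>m\<in>Poly_Mapping.keys p. Poly_Mapping.single m 1)"
  using ind_keys[of p] unfolding ind_def by simp

abbreviation J :: "nat \<Rightarrow> f2poly set" where "J n \<equiv> deg_ideal n 4"

lemma J_keys: "p \<in> J n \<Longrightarrow> m \<in> Poly_Mapping.keys p \<Longrightarrow> 4 \<le> total_degree m"
  unfolding deg_ideal_def
proof -
  assume p: "p \<in> ideal_gen n {Poly_Mapping.single mon 1 |mon. Poly_Mapping.keys mon \<subseteq> {1..n} \<and> total_degree mon = 4}"
    and m: "m \<in> Poly_Mapping.keys p"
  have "\<forall>m\<in>Poly_Mapping.keys p. 4 \<le> total_degree m"
  proof (rule ideal_gen_keys[OF _ _ p])
    fix g m assume "g \<in> {Poly_Mapping.single mon (1::bit) |mon. Poly_Mapping.keys mon \<subseteq> {1..n} \<and> total_degree mon = 4}"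
      "m \<in> Poly_Mapping.keys g"
    then show "4 \<le> total_degree m" by auto
  next
    fix a m :: "nat \<Rightarrow>\<^sub>0 nat" assume "4 \<le> total_degree m" then show "4 \<le> total_degree (a + m)"
      by (simp add: td_add)
  qed
  then show ?thesis using m by blast
qed

lemma J_polys: "p \<in> J n \<Longrightarrow> p \<in> polys n"
  unfolding deg_ideal_def
  by (erule ideal_gen_polys[rotated]) (auto simp: polys_def)

lemma J_zero: "0 \<in> J n" unfolding deg_ideal_def by (rule ideal_gen.zero)
lemma J_add: "p \<in> J n \<Longrightarrow> q \<in> J n \<Longrightarrow> p + q \<in> J n" unfolding deg_ideal_def by (rule ideal_gen.add)

lemma J_single:
  assumes "Poly_Mapping.keys m \<subseteq> {1..n}" "4 \<le> total_degree m"
  shows "Poly_Mapping.single m 1 \<in> J n"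
proof -
  obtain d where d: "\<forall>i. Poly_Mapping.lookup d i \<le> Poly_Mapping.lookup m i" "total_degree d = 4"
    using sub_mon_exists[OF assms(2)] by blast
  have md: "(m - d) + d = m"
    by (rule poly_mapping_eqI) (simp add: lookup_add lookup_minus d(1))
  have kd: "Poly_Mapping.keys d \<subseteq> Poly_Mapping.keys m"
  proof
    fix i assume "i \<in> Poly_Mapping.keys d"
    then have "Poly_Mapping.lookup d i \<noteq> 0" by (simp add: in_keys_iff)
    then have "Poly_Mapping.lookup m i \<noteq> 0" using d(1)[rule_format, of i] by linarith
    then show "i \<in> Poly_Mapping.keys m" by (simp add: in_keys_iff)
  qed
  have kmd: "Poly_Mapping.keys (m - d) \<subseteq> Poly_Mapping.keys m"
    by (auto simp: in_keys_iff lookup_minus)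
  have e: "Poly_Mapping.single (m - d) (1::bit) * Poly_Mapping.single d 1 = Poly_Mapping.single m 1"
    by (simp only: mult_single md mult_1)
  have r: "Poly_Mapping.single (m - d) (1::bit) \<in> polys n"
    using kmd assms(1) by (auto simp: polys_def)
  have g: "Poly_Mapping.single d (1::bit) \<in>
     {Poly_Mapping.single mon 1 | mon. Poly_Mapping.keys mon \<subseteq> {1..n} \<and> total_degree mon = 4}"
    unfolding mem_Collect_eq by (intro exI[of _ d]) (use kd assms(1) d(2) in auto)
  show ?thesis unfolding deg_ideal_def using ideal_gen.mult[OF r g] unfolding e .
qed

lemma J_char:
  assumes "p \<in> polys n" "\<forall>m\<in>Poly_Mapping.keys p. 4 \<le> total_degree m"
  shows "p \<in> J n"
proof -
  have "(\<Sum>m\<in>Poly_Mapping.keys p. Poly_Mapping.single m 1) \<in> J n"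
    unfolding deg_ideal_def
  proof (rule ideal_gen_sum)
    fix x assume "x \<in> Poly_Mapping.keys p"
    then show "Poly_Mapping.single x 1 \<in> ideal_gen n {Poly_Mapping.single mon 1 |mon. Poly_Mapping.keys mon \<subseteq> {1..n} \<and> total_degree mon = 4}"
      using J_single[of x n] assms unfolding polys_def deg_ideal_def by auto
  qed simp
  then show ?thesis by (simp only: f2_sum_single[of p, symmetric])
qed

lemma quot_card_transfer:
  fixes \<phi> :: "'a::plus \<Rightarrow> 'b::plus"
  assumes inj: "inj_on \<phi> U" and hom: "\<And>x y. x\<in>U \<Longrightarrow> y\<in>U \<Longrightarrow> \<phi> (x+y) = \<phi> x + \<phi> y"
    and cl: "\<And>x y. x\<in>U \<Longrightarrow> y\<in>U \<Longrightarrow> x+y \<in> U" and SU: "S \<subseteq> U" and TU: "T \<subseteq> U"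
  shows "quot_card S T = quot_card (\<phi>`S) (\<phi>`T)"
proof -
  have img: "\<phi> ` (x +o T) = \<phi> x +o \<phi> ` T" if "x \<in> S" for x
  proof -
    have "\<phi> ` (x +o T) = (\<lambda>t. \<phi> (x + t)) ` T" unfolding elt_set_plus_def by auto
    also have "\<dots> = (\<lambda>t. \<phi> x + \<phi> t) ` T" using hom SU TU that by (intro image_cong) auto
    also have "\<dots> = \<phi> x +o \<phi> ` T" unfolding elt_set_plus_def by auto
    finally show ?thesis .
  qed
  have sub: "(\<lambda>x. x +o T) ` S \<subseteq> Pow U"
    using cl SU TU unfolding elt_set_plus_def by auto
  have inj2: "inj_on (image \<phi>) ((\<lambda>x. x +o T) ` S)"
    using inj_on_image_Pow[OF inj] sub by (rule inj_on_subset)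
  have "quot_card S T = card ((\<lambda>x. x +o T) ` S)" unfolding quot_card_def ..
  also have "\<dots> = card (image \<phi> ` ((\<lambda>x. x +o T) ` S))" using card_image[OF inj2] by simp
  also have "image \<phi> ` ((\<lambda>x. x +o T) ` S) = (\<lambda>x. \<phi> x +o \<phi> ` T) ` S"
    unfolding image_image using img by (intro image_cong) auto
  also have "\<dots> = (\<lambda>y. y +o \<phi> ` T) ` (\<phi> ` S)" by (simp add: image_image)
  finally show ?thesis unfolding quot_card_def .
qed

lemma image_set_plus_hom:
  assumes hom: "\<And>x y. x\<in>U \<Longrightarrow> y\<in>U \<Longrightarrow> \<phi> (x+y) = \<phi> x + \<phi> y" and "A \<subseteq> U" "B \<subseteq> U"
  shows "\<phi> ` (A + B) = \<phi> ` A + \<phi> ` B"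
proof
  show "\<phi> ` (A + B) \<subseteq> \<phi> ` A + \<phi> ` B"
  proof
    fix z assume "z \<in> \<phi> ` (A + B)"
    then obtain a b where ab: "a \<in> A" "b \<in> B" "z = \<phi> (a + b)" by (auto elim!: set_plus_elim)
    have "a \<in> U" "b \<in> U" using ab assms(2,3) by auto
    then have "z = \<phi> a + \<phi> b" using hom ab by auto
    then show "z \<in> \<phi> ` A + \<phi> ` B" using ab by (simp add: set_plus_intro)
  qed
next
  show "\<phi> ` A + \<phi> ` B \<subseteq> \<phi> ` (A + B)"
  proof
    fix z assume "z \<in> \<phi> ` A + \<phi> ` B"
    then obtain a b where ab: "a \<in> A" "b \<in> B" "z = \<phi> a + \<phi> b" by (auto elim!: set_plus_elim)
    have "a \<in> U" "b \<in> U" using ab assms(2,3) by auto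
    then have "z = \<phi> (a + b)" using hom ab by auto
    then show "z \<in> \<phi> ` (A + B)" using ab by (auto intro!: set_plus_intro)
  qed
qed

definition Lo :: "(nat \<Rightarrow>\<^sub>0 nat) set" where "Lo = {m. total_degree m \<le> 3}"

definition Tr :: "f2poly \<Rightarrow> f2poly" where "Tr p = ind (Poly_Mapping.keys p \<inter> Lo)"

lemma keys_Tr[simp]: "Poly_Mapping.keys (Tr p) = Poly_Mapping.keys p \<inter> Lo"
  unfolding Tr_def by simp

lemma Tr_add: "Tr (p + q) = Tr p + Tr q"
  unfolding Tr_def by (simp add: ind_add keys_add_f2) (simp add: symdiff_def Int_Un_distrib2 Diff_Int_distrib2)

lemma Tr_J: "j \<in> J n \<Longrightarrow> Tr j = 0"
proof -
  assume j: "j \<in> J n"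
  have "Poly_Mapping.keys j \<inter> Lo = {}" using J_keys[OF j] unfolding Lo_def by fastforce
  then show "Tr j = 0" unfolding Tr_def by (simp add: ind_def)
qed

lemma coset_shift:
  fixes W :: "f2poly set"
  assumes "y \<in> W" "\<And>a b. a \<in> W \<Longrightarrow> b \<in> W \<Longrightarrow> a + b \<in> W"
  shows "(x + y) +o W = x +o W"
proof
  show "(x + y) +o W \<subseteq> x +o W"
    unfolding elt_set_plus_def using assms by (auto simp: add.assoc)
next
  show "x +o W \<subseteq> (x + y) +o W"
  proof
    fix z assume "z \<in> x +o W"
    then obtain w where w: "w \<in> W" "z = x + w" unfolding elt_set_plus_def by auto
    have "(x + y) + (y + w) = x + ((y + y) + w)" by (simp only: add.assoc)
    also have "\<dots> = z" using w(2) by (simp only: f2_add_self add_0_left)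
    finally have "z = (x + y) + (y + w)" by simp
    then show "z \<in> (x + y) +o W" using assms w(1) unfolding elt_set_plus_def by auto
  qed
qed

abbreviation Cs :: "nat \<Rightarrow> f2poly \<Rightarrow> f2poly set" where "Cs n p \<equiv> p +o J n"

lemma JJ: "J n + J n = J n"
proof
  show "J n + J n \<subseteq> J n" by (auto elim!: set_plus_elim intro: J_add)
next
  show "J n \<subseteq> J n + J n"
  proof
    fix x assume "x \<in> J n" then show "x \<in> J n + J n"
      using set_plus_intro[of x "J n" 0 "J n"] J_zero by simp
  qed
qed

lemma Cs_add: "Cs n p + Cs n q = Cs n (p + q)"
  by (simp add: set_plus_rearrange JJ)

lemma Cs_mem: "p \<in> Cs n p"
  using set_plus_intro2[of 0 "J n" p] J_zero by simp

lemma Cs_eq: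
  assumes "p \<in> polys n" "q \<in> polys n"
  shows "Cs n p = Cs n q \<longleftrightarrow> Tr p = Tr q"
proof
  assume "Cs n p = Cs n q"
  then have "p \<in> Cs n q" using Cs_mem by metis
  then obtain j where "j \<in> J n" "p = q + j" unfolding elt_set_plus_def by auto
  then show "Tr p = Tr q" by (simp add: Tr_add Tr_J)
next
  assume "Tr p = Tr q"
  then have "Tr (p + q) = 0" by (simp add: Tr_add)
  then have "Poly_Mapping.keys (p + q) \<inter> Lo = {}" using keys_Tr[of "p+q"] by simp
  then have "\<forall>m\<in>Poly_Mapping.keys (p + q). 4 \<le> total_degree m" unfolding Lo_def by auto
  then have pq: "p + q \<in> J n" using J_char polys_add assms by blast
  have "Cs n (q + (p + q)) = Cs n q" by (rule coset_shift[OF pq J_add])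
  moreover have "q + (p + q) = p + (q + q)" by (metis add.assoc add.commute)
  then have "q + (p + q) = p" by (simp only: f2_add_self add_0_right)
  ultimately show "Cs n p = Cs n q" by simp
qed

definition phi :: "nat \<Rightarrow> f2poly set \<Rightarrow> f2poly" where
  "phi n X = Tr (SOME p. p \<in> X \<and> p \<in> polys n)"

lemma phi_Cs: assumes "p \<in> polys n" shows "phi n (Cs n p) = Tr p"
proof -
  have ex: "\<exists>p'. p' \<in> Cs n p \<and> p' \<in> polys n" using Cs_mem assms by blast
  define p' where "p' = (SOME p'. p' \<in> Cs n p \<and> p' \<in> polys n)"
  have p': "p' \<in> Cs n p" "p' \<in> polys n" using someI_ex[OF ex] unfolding p'_def by auto
  then obtain j where "j \<in> J n" "p' = p + j" unfolding elt_set_plus_def by auto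
  then have "Tr p' = Tr p" by (simp add: Tr_add Tr_J)
  then show ?thesis unfolding phi_def p'_def by simp
qed

definition sqf :: "nat set \<Rightarrow> (nat \<Rightarrow>\<^sub>0 nat)" where
  "sqf e = (\<Sum>v\<in>e. Poly_Mapping.single v 1)"

lemma lookup_sqf: "finite e \<Longrightarrow> Poly_Mapping.lookup (sqf e) v = (if v \<in> e then 1 else 0)"
  unfolding sqf_def by (simp add: lookup_sum lookup_single when_def)

lemma keys_sqf[simp]: "finite e \<Longrightarrow> Poly_Mapping.keys (sqf e) = e"
  by (auto simp: in_keys_iff lookup_sqf split: if_splits)

lemma td_sqf[simp]: "finite e \<Longrightarrow> total_degree (sqf e) = card e"
  unfolding total_degree_def by (simp add: lookup_sqf)

lemma sqf_insert: "finite e \<Longrightarrow> k \<notin> e \<Longrightarrow> sqf (insert k e) = sqf e + Poly_Mapping.single k 1"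
  unfolding sqf_def by (simp add: add.commute)

lemma var_mon_mult: "i \<noteq> j \<Longrightarrow> var_mon i * var_mon j = Poly_Mapping.single (sqf {i, j}) 1"
  unfolding var_mon_def sqf_def by (simp add: mult_single)

definition edges_ok :: "nat \<Rightarrow> nat set set \<Rightarrow> bool" where
  "edges_ok n Q \<longleftrightarrow> (\<forall>e\<in>Q. e \<subseteq> {1..n} \<and> card e = 2)"

definition MQ :: "nat \<Rightarrow> nat set set \<Rightarrow> (nat \<Rightarrow>\<^sub>0 nat) set" where
  "MQ n Q = {m. total_degree m \<le> 3 \<and> Poly_Mapping.keys m \<subseteq> {1..n} \<and> (\<exists>e\<in>Q. \<exists>m'. m = m' + sqf e)}"

abbreviation gens :: "nat set set \<Rightarrow> f2poly set" where
  "gens Q \<equiv> {var_mon i * var_mon j | i j. {i, j} \<in> Q}"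

lemma gens_char:
  assumes "edges_ok n Q" "g \<in> gens Q"
  shows "\<exists>e\<in>Q. g = Poly_Mapping.single (sqf e) 1"
proof -
  obtain i j where ij: "g = var_mon i * var_mon j" "{i,j} \<in> Q" using assms(2) by blast
  then have "card {i,j} = 2" using assms(1) unfolding edges_ok_def by blast
  then have "i \<noteq> j" by (cases "i = j") auto
  then show ?thesis using ij var_mon_mult by blast
qed

lemma edge_keys:
  assumes "edges_ok n Q" "p \<in> edge_ideal n Q"
  shows "\<forall>m\<in>Poly_Mapping.keys p. Poly_Mapping.keys m \<subseteq> {1..n} \<and> (\<exists>e\<in>Q. \<exists>m'. m = m' + sqf e)"
  using assms(2) unfolding edge_ideal_def
proof (rule ideal_gen_keys[rotated 2])
  fix g m assume g: "g \<in> gens Q" and m: "m \<in> Poly_Mapping.keys g"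
  obtain e where e: "e \<in> Q" "g = Poly_Mapping.single (sqf e) 1" using gens_char[OF assms(1) g] by blast
  then have "m = sqf e" using m by simp
  moreover have "finite e" "e \<subseteq> {1..n}" using e(1) assms(1) unfolding edges_ok_def
    by (auto intro: finite_subset)
  ultimately show "Poly_Mapping.keys m \<subseteq> {1..n} \<and> (\<exists>e\<in>Q. \<exists>m'. m = m' + sqf e)"
    using e(1) by (intro conjI bexI[of _ e] exI[of _ 0]) auto
next
  fix a m :: "nat \<Rightarrow>\<^sub>0 nat"
  assume a: "Poly_Mapping.keys a \<subseteq> {1..n}"
    and m: "Poly_Mapping.keys m \<subseteq> {1..n} \<and> (\<exists>e\<in>Q. \<exists>m'. m = m' + sqf e)"
  then obtain e m' where "e \<in> Q" "m = m' + sqf e" by blast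
  then have "a + m = (a + m') + sqf e" by (simp add: add.assoc)
  moreover have "Poly_Mapping.keys (a + m) \<subseteq> {1..n}" using a m by (simp add: keys_add_nat)
  ultimately show "Poly_Mapping.keys (a + m) \<subseteq> {1..n} \<and> (\<exists>e\<in>Q. \<exists>m'. a + m = m' + sqf e)"
    using \<open>e \<in> Q\<close> by blast
qed

lemma edge_polys:
  assumes "edges_ok n Q" "p \<in> edge_ideal n Q" shows "p \<in> polys n"
  using edge_keys[OF assms] unfolding polys_def by blast

lemma edge_single:
  assumes "edges_ok n Q" "m \<in> MQ n Q"
  shows "Poly_Mapping.single m 1 \<in> edge_ideal n Q"
proof -
  obtain e m' where em: "e \<in> Q" "m = m' + sqf e" "Poly_Mapping.keys m \<subseteq> {1..n}"
    using assms(2) unfolding MQ_def by blast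
  obtain i j where ij: "e = {i, j}" "i \<noteq> j"
    using assms(1) em(1) unfolding edges_ok_def by (meson card_2_iff)
  have g: "var_mon i * var_mon j \<in> gens Q" using em(1) ij(1) by blast
  have r: "Poly_Mapping.single m' (1::bit) \<in> polys n"
    using em(2,3) unfolding polys_def by (auto simp: keys_add_nat)
  have "Poly_Mapping.single m' 1 * (var_mon i * var_mon j) = Poly_Mapping.single m 1"
    unfolding var_mon_mult[OF ij(2)] mult_single em(2) ij(1) by simp
  then show ?thesis using ideal_gen.mult[OF r g] unfolding edge_ideal_def by simp
qed

definition Vs :: "(nat \<Rightarrow>\<^sub>0 nat) set \<Rightarrow> f2poly set" where
  "Vs A = {p. Poly_Mapping.keys p \<subseteq> A}"

lemma MQ_Lo: "MQ n Q \<subseteq> Lo" unfolding MQ_def Lo_def by auto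

lemma Tr_edge:
  assumes "edges_ok n Q"
  shows "Tr ` edge_ideal n Q = Vs (MQ n Q)"
proof
  show "Tr ` edge_ideal n Q \<subseteq> Vs (MQ n Q)"
  proof
    fix x assume "x \<in> Tr ` edge_ideal n Q"
    then obtain p where p: "p \<in> edge_ideal n Q" "x = Tr p" by blast
    have "Poly_Mapping.keys p \<inter> Lo \<subseteq> MQ n Q"
      using edge_keys[OF assms p(1)] unfolding MQ_def Lo_def by auto
    then show "x \<in> Vs (MQ n Q)" unfolding Vs_def p(2) by simp
  qed
next
  show "Vs (MQ n Q) \<subseteq> Tr ` edge_ideal n Q"
  proof
    fix p assume p: "p \<in> Vs (MQ n Q)"
    have "(\<Sum>m\<in>Poly_Mapping.keys p. Poly_Mapping.single m 1) \<in> edge_ideal n Q"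
      unfolding edge_ideal_def
    proof (rule ideal_gen_sum)
      fix m assume "m \<in> Poly_Mapping.keys p"
      then have "m \<in> MQ n Q" using p unfolding Vs_def by blast
      then show "Poly_Mapping.single m 1 \<in> ideal_gen n (gens Q)"
        using edge_single[OF assms] unfolding edge_ideal_def by blast
    qed simp
    then have pe: "p \<in> edge_ideal n Q" by (simp only: f2_sum_single[of p, symmetric])
    have "Poly_Mapping.keys p \<inter> Lo = Poly_Mapping.keys p" using p MQ_Lo unfolding Vs_def by blast
    then have "Tr p = p" unfolding Tr_def by simp
    then show "p \<in> Tr ` edge_ideal n Q" using pe by (metis image_eqI)
  qed
qed

lemma MQ_char:
  assumes "edges_ok n Q"
  shows "MQ n Q = sqf ` Q \<union> (\<lambda>(e,k). sqf e + Poly_Mapping.single k 1) ` (Q \<times> {1..n})"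
proof
  show "MQ n Q \<subseteq> sqf ` Q \<union> (\<lambda>(e,k). sqf e + Poly_Mapping.single k 1) ` (Q \<times> {1..n})"
  proof
    fix m assume "m \<in> MQ n Q"
    then obtain e m' where em: "e \<in> Q" "m = m' + sqf e" "Poly_Mapping.keys m \<subseteq> {1..n}" "total_degree m \<le> 3"
      unfolding MQ_def by blast
    have fe: "finite e" "card e = 2" using em(1) assms unfolding edges_ok_def by (auto intro: finite_subset)
    have "total_degree m' \<le> 1" using em(2,4) fe by (simp add: td_add)
    then consider "total_degree m' = 0" | "total_degree m' = 1" by linarith
    then show "m \<in> sqf ` Q \<union> (\<lambda>(e,k). sqf e + Poly_Mapping.single k 1) ` (Q \<times> {1..n})"
    proof cases
      case 1
      then have "m' = 0" by (rule td_eq0)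
      then show ?thesis using em by simp
    next
      case 2
      then obtain k where k: "m' = Poly_Mapping.single k 1" using td_eq1 by blast
      then have "k \<in> {1..n}" using em(2,3) by (auto simp: keys_add_nat)
      then have "(e, k) \<in> Q \<times> {1..n}" using em(1) by simp
      moreover have "m = (\<lambda>(e,k). sqf e + Poly_Mapping.single k 1) (e, k)" using em(2) k by (simp add: add.commute)
      ultimately show ?thesis by blast
    qed
  qed
next
  show "sqf ` Q \<union> (\<lambda>(e,k). sqf e + Poly_Mapping.single k 1) ` (Q \<times> {1..n}) \<subseteq> MQ n Q"
  proof
    fix m assume "m \<in> sqf ` Q \<union> (\<lambda>(e,k). sqf e + Poly_Mapping.single k 1) ` (Q \<times> {1..n})"
    then consider e where "e \<in> Q" "m = sqf e" | e k where "e \<in> Q" "k \<in> {1..n}" "m = sqf e + Poly_Mapping.single k 1"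
      by (elim UnE imageE) auto
    then show "m \<in> MQ n Q"
    proof cases
      case 1
      have fe: "finite e" "card e = 2" "e \<subseteq> {1..n}" using 1(1) assms unfolding edges_ok_def by (auto intro: finite_subset)
      then show ?thesis unfolding MQ_def using 1 by (auto intro!: bexI[of _ e] exI[of _ 0])
    next
      case 2
      have fe: "finite e" "card e = 2" "e \<subseteq> {1..n}" using 2(1) assms unfolding edges_ok_def by (auto intro: finite_subset)
      have "m = Poly_Mapping.single k 1 + sqf e" using 2(3) by (simp add: add.commute)
      then show ?thesis unfolding MQ_def using 2 fe by (auto simp: td_add keys_add_nat intro!: bexI[of _ e])
    qed
  qed
qed

lemma finite_MQ: "edges_ok n Q \<Longrightarrow> finite Q \<Longrightarrow> finite (MQ n Q)"
  by (simp add: MQ_char)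

lemma V_plus: "Vs A + Vs B = Vs (A \<union> B)"
proof
  show "Vs A + Vs B \<subseteq> Vs (A \<union> B)"
    by (auto elim!: set_plus_elim simp: Vs_def keys_add_f2 symdiff_def)
next
  show "Vs (A \<union> B) \<subseteq> Vs A + Vs B"
  proof
    fix p assume p: "p \<in> Vs (A \<union> B)"
    have sd: "symdiff (Poly_Mapping.keys p \<inter> A) (Poly_Mapping.keys p - A) = Poly_Mapping.keys p"
      unfolding symdiff_def by blast
    have "p = ind (Poly_Mapping.keys p \<inter> A) + ind (Poly_Mapping.keys p - A)"
      using ind_add[of "Poly_Mapping.keys p \<inter> A" "Poly_Mapping.keys p - A"] unfolding sd by simp
    moreover have "ind (Poly_Mapping.keys p \<inter> A) \<in> Vs A" "ind (Poly_Mapping.keys p - A) \<in> Vs B"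
      using p unfolding Vs_def by auto
    ultimately show "p \<in> Vs A + Vs B" by (metis set_plus_intro)
  qed
qed

lemma V_Int: "Vs A \<inter> Vs B = Vs (A \<inter> B)"
  unfolding Vs_def by auto

lemma quot_card_V:
  assumes "finite A" "B \<subseteq> A"
  shows "quot_card (Vs A) (Vs B) = 2 ^ card (A - B)"
proof -
  let ?W = "Vs B"
  have W0: "0 \<in> ?W" unfolding Vs_def by simp
  have Wadd: "\<And>a b. a \<in> ?W \<Longrightarrow> b \<in> ?W \<Longrightarrow> a + b \<in> ?W"
    unfolding Vs_def by (auto simp: keys_add_f2 symdiff_def)
  have mem: "x \<in> x +o ?W" for x using set_plus_intro2[of 0 ?W x] W0 by simp
  have eq: "(\<lambda>x. x +o ?W) ` Vs A = (\<lambda>X. ind X +o ?W) ` Pow (A - B)"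
  proof
    show "(\<lambda>x. x +o ?W) ` Vs A \<subseteq> (\<lambda>X. ind X +o ?W) ` Pow (A - B)"
    proof
      fix z assume "z \<in> (\<lambda>x. x +o ?W) ` Vs A"
      then obtain x where x: "x \<in> Vs A" "z = x +o ?W" by blast
      have sd: "symdiff (Poly_Mapping.keys x - B) (Poly_Mapping.keys x \<inter> B) = Poly_Mapping.keys x"
        unfolding symdiff_def by blast
      have "x = ind (Poly_Mapping.keys x - B) + ind (Poly_Mapping.keys x \<inter> B)"
        using ind_add[of "Poly_Mapping.keys x - B" "Poly_Mapping.keys x \<inter> B"] unfolding sd by simp
      moreover have "ind (Poly_Mapping.keys x \<inter> B) \<in> ?W" unfolding Vs_def by simp
      ultimately have "z = ind (Poly_Mapping.keys x - B) +o ?W"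
        using x(2) coset_shift[OF _ Wadd] by metis
      moreover have "Poly_Mapping.keys x - B \<in> Pow (A - B)" using x(1) unfolding Vs_def by auto
      ultimately show "z \<in> (\<lambda>X. ind X +o ?W) ` Pow (A - B)" by blast
    qed
  next
    show "(\<lambda>X. ind X +o ?W) ` Pow (A - B) \<subseteq> (\<lambda>x. x +o ?W) ` Vs A"
    proof
      fix z assume "z \<in> (\<lambda>X. ind X +o ?W) ` Pow (A - B)"
      then obtain X where X: "X \<subseteq> A - B" "z = ind X +o ?W" by blast
      have "finite X" using X(1) assms(1) by (meson Diff_subset finite_subset)
      then have "ind X \<in> Vs A" using X(1) unfolding Vs_def by auto
      then show "z \<in> (\<lambda>x. x +o ?W) ` Vs A" using X(2) by blast
    qed
  qed
  have inj: "inj_on (\<lambda>X. ind X +o ?W) (Pow (A - B))"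
  proof (rule inj_onI)
    fix X Y assume X: "X \<in> Pow (A - B)" and Y: "Y \<in> Pow (A - B)" and e: "ind X +o ?W = ind Y +o ?W"
    have fX: "finite X" "finite Y" using X Y assms(1) by (auto intro: finite_subset)
    have "ind X \<in> ind Y +o ?W" using mem[of "ind X"] e by simp
    then obtain w where w: "w \<in> ?W" "ind X = ind Y + w" unfolding elt_set_plus_def by auto
    have "X = symdiff Y (Poly_Mapping.keys w)"
      using arg_cong[OF w(2), of Poly_Mapping.keys] fX by (simp add: keys_add_f2)
    moreover have "Poly_Mapping.keys w \<subseteq> B" using w(1) unfolding Vs_def by simp
    ultimately show "X = Y" using X Y unfolding symdiff_def by blast
  qed
  have "quot_card (Vs A) ?W = card ((\<lambda>X. ind X +o ?W) ` Pow (A - B))"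
    unfolding quot_card_def eq ..
  also have "\<dots> = card (Pow (A - B))" by (rule card_image[OF inj])
  also have "\<dots> = 2 ^ card (A - B)" using assms(1) by (simp add: card_Pow)
  finally show ?thesis .
qed

lemma dprime_formula:
  assumes ok1: "edges_ok n Q1" and ok2: "edges_ok n Q2" and f1: "finite Q1" and f2: "finite Q2"
  shows "d'_m n 4 Q1 Q2 = real (card (symdiff (MQ n Q1) (MQ n Q2)))"
proof -
  define U where "U = Cs n ` polys n"
  define P1 where "P1 = pi_map n 4 ` edge_ideal n Q1"
  define P2 where "P2 = pi_map n 4 ` edge_ideal n Q2"
  have P1: "P1 = Cs n ` edge_ideal n Q1" unfolding P1_def pi_map_def ..
  have P2: "P2 = Cs n ` edge_ideal n Q2" unfolding P2_def pi_map_def ..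
  have inj: "inj_on (phi n) U"
  proof (rule inj_onI)
    fix x y assume "x \<in> U" "y \<in> U" "phi n x = phi n y"
    then obtain p q where "p \<in> polys n" "q \<in> polys n" "x = Cs n p" "y = Cs n q" "phi n (Cs n p) = phi n (Cs n q)"
      unfolding U_def by blast
    then show "x = y" using Cs_eq phi_Cs by metis
  qed
  have hom: "phi n (x + y) = phi n x + phi n y" if xy: "x \<in> U" "y \<in> U" for x y
  proof -
    obtain p q where pq: "p \<in> polys n" "q \<in> polys n" "x = Cs n p" "y = Cs n q" using xy unfolding U_def by blast
    have "phi n (x + y) = phi n (Cs n (p + q))" using pq by (simp add: Cs_add)
    also have "\<dots> = Tr (p + q)" using phi_Cs polys_add pq by blast
    also have "\<dots> = phi n x + phi n y" using pq phi_Cs Tr_add by simp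
    finally show ?thesis .
  qed
  have cl: "x + y \<in> U" if xy: "x \<in> U" "y \<in> U" for x y
  proof -
    obtain p q where pq: "p \<in> polys n" "q \<in> polys n" "x = Cs n p" "y = Cs n q" using xy unfolding U_def by blast
    then show ?thesis using Cs_add polys_add unfolding U_def by auto
  qed
  have P1U: "P1 \<subseteq> U" unfolding P1 U_def using edge_polys[OF ok1] by blast
  have P2U: "P2 \<subseteq> U" unfolding P2 U_def using edge_polys[OF ok2] by blast
  have PPU: "P1 + P2 \<subseteq> U" using P1U P2U cl by (auto elim!: set_plus_elim)
  have img1: "phi n ` P1 = Vs (MQ n Q1)"
  proof -
    have "phi n ` P1 = Tr ` edge_ideal n Q1"
      unfolding P1 image_image using phi_Cs edge_polys[OF ok1] by (intro image_cong) auto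
    then show ?thesis using Tr_edge[OF ok1] by simp
  qed
  have img2: "phi n ` P2 = Vs (MQ n Q2)"
  proof -
    have "phi n ` P2 = Tr ` edge_ideal n Q2"
      unfolding P2 image_image using phi_Cs edge_polys[OF ok2] by (intro image_cong) auto
    then show ?thesis using Tr_edge[OF ok2] by simp
  qed
  have "quot_card (P1 + P2) (P1 \<inter> P2) = quot_card (phi n ` (P1 + P2)) (phi n ` (P1 \<inter> P2))"
    by (rule quot_card_transfer[OF inj hom cl PPU]) (use P1U in auto)
  also have "phi n ` (P1 + P2) = Vs (MQ n Q1 \<union> MQ n Q2)"
    using image_set_plus_hom[OF hom P1U P2U] img1 img2 V_plus by simp
  also have "phi n ` (P1 \<inter> P2) = Vs (MQ n Q1 \<inter> MQ n Q2)"
    using inj_on_image_Int[OF inj P1U P2U] img1 img2 V_Int by simp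
  also have "quot_card (Vs (MQ n Q1 \<union> MQ n Q2)) (Vs (MQ n Q1 \<inter> MQ n Q2))
      = 2 ^ card ((MQ n Q1 \<union> MQ n Q2) - (MQ n Q1 \<inter> MQ n Q2))"
    using finite_MQ[OF ok1 f1] finite_MQ[OF ok2 f2] by (intro quot_card_V) auto
  also have "(MQ n Q1 \<union> MQ n Q2) - (MQ n Q1 \<inter> MQ n Q2) = symdiff (MQ n Q1) (MQ n Q2)"
    unfolding symdiff_def by blast
  finally have "quot_card (P1 + P2) (P1 \<inter> P2) = 2 ^ card (symdiff (MQ n Q1) (MQ n Q2))" .
  then show ?thesis unfolding d'_m_def Let_def P1_def[symmetric] P2_def[symmetric]
    by simp
qed

definition matching :: "nat set set \<Rightarrow> bool" where
  "matching Q \<longleftrightarrow> (\<forall>e\<in>Q. \<forall>f\<in>Q. e \<inter> f \<noteq> {} \<longrightarrow> e = f)"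

lemma disj_by_fun: "(\<And>m. m \<in> X \<Longrightarrow> f m = a) \<Longrightarrow> (\<And>m. m \<in> Y \<Longrightarrow> f m = b) \<Longrightarrow> a \<noteq> b \<Longrightarrow> X \<inter> Y = {}"
  by auto

lemma card2_finite: "card e = 2 \<Longrightarrow> finite e"
  using card.infinite by fastforce

lemma in_3set:
  assumes "matching Q" "e \<in> Q" "e' \<in> Q" "card e = 2" "card e' = 2" "e \<subseteq> U" "e' \<subseteq> U" "finite U" "card U \<le> 3"
  shows "e = e'"
proof (rule ccontr)
  assume "e \<noteq> e'"
  then have "e \<inter> e' = {}" using assms(1-3) unfolding matching_def by blast
  moreover have "finite e" "finite e'" using assms(4,5) card2_finite by auto
  ultimately have "card (e \<union> e') = 4" using assms(4,5) by (simp add: card_Un_disjoint)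
  moreover have "card (e \<union> e') \<le> card U" using assms(6-8) by (intro card_mono) auto
  ultimately show False using assms(9) by simp
qed

lemma two_sets_share:
  assumes "card e = 2" "card f = 2" "e \<noteq> f" "v \<in> e" "v \<in> f"
  shows "\<exists>k. f = {v, k} \<and> k \<notin> e \<and> e \<union> f = insert k e"
proof -
  obtain k where k: "f = {v, k}" "k \<noteq> v"
  proof -
    obtain a b where ab: "f = {a, b}" "a \<noteq> b" using assms(2) card_2_iff by metis
    show ?thesis
    proof (cases "v = a")
      case True then show ?thesis using that ab by blast
    next
      case False then have "v = b" using ab assms(5) by blast
      then show ?thesis using that[of a] ab by blast
    qed
  qed
  have "k \<notin> e"
  proof
    assume "k \<in> e"
    then have "f \<subseteq> e" using k assms(4) by blast
    then have "f = e" using assms(1,2) card2_finite by (metis card_subset_eq)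
    then show False using assms(3) by simp
  qed
  moreover have "e \<union> f = insert k e" using k assms(4) by blast
  ultimately show ?thesis using k by blast
qed

lemma keys_f3[simp]: "finite e \<Longrightarrow> c \<noteq> 0 \<Longrightarrow> Poly_Mapping.keys (sqf e + Poly_Mapping.single k (c::nat)) = insert k e"
  by (simp add: keys_add_nat)

lemma card_symdiff_aux: "finite A \<Longrightarrow> finite B \<Longrightarrow> card (symdiff A B) + 2 * card (A \<inter> B) = card A + card B"
proof -
  assume f: "finite A" "finite B"
  have "card (symdiff A B) = card (A - B) + card (B - A)"
    unfolding symdiff_def using f by (intro card_Un_disjoint) auto
  moreover have "card A = card (A - B) + card (A \<inter> B)"
  proof -
    have "A = (A - B) \<union> (A \<inter> B)" by blast
    then have "card A = card ((A - B) \<union> (A \<inter> B))" by simp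
    also have "\<dots> = card (A - B) + card (A \<inter> B)" using f by (intro card_Un_disjoint) auto
    finally show ?thesis .
  qed
  moreover have "card B = card (B - A) + card (A \<inter> B)"
  proof -
    have "B = (B - A) \<union> (A \<inter> B)" by blast
    then have "card B = card ((B - A) \<union> (A \<inter> B))" by simp
    also have "\<dots> = card (B - A) + card (A \<inter> B)" using f by (intro card_Un_disjoint) auto
    finally show ?thesis .
  qed
  ultimately show ?thesis by simp
qed

locale mm =
  fixes n :: nat and Q1 Q2 :: "nat set set"
  assumes ok1: "edges_ok n Q1" and ok2: "edges_ok n Q2"
    and m1: "matching Q1" and m2: "matching Q2"
begin

lemma fin1: "finite Q1"
  using ok1 unfolding edges_ok_def by (intro finite_subset[of Q1 "Pow {1..n}"]) auto
lemma fin2: "finite Q2"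
  using ok2 unfolding edges_ok_def by (intro finite_subset[of Q2 "Pow {1..n}"]) auto

lemma e1: "e \<in> Q1 \<Longrightarrow> card e = 2 \<and> finite e \<and> e \<subseteq> {1..n}"
  using ok1 card2_finite unfolding edges_ok_def by blast
lemma e2: "e \<in> Q2 \<Longrightarrow> card e = 2 \<and> finite e \<and> e \<subseteq> {1..n}"
  using ok2 card2_finite unfolding edges_ok_def by blast

definition Pairs :: "(nat set \<times> nat set) set" where
  "Pairs = {(e, f). e \<in> Q1 \<and> f \<in> Q2 \<and> e \<noteq> f \<and> e \<inter> f \<noteq> {}}"

lemma finite_Pairs: "finite Pairs"
proof -
  have "Pairs \<subseteq> Q1 \<times> Q2" unfolding Pairs_def by auto
  moreover have "finite (Q1 \<times> Q2)" using fin1 fin2 by simp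
  ultimately show ?thesis by (rule finite_subset)
qed

lemma A_count_Pairs: "A_count (Q1 \<union> Q2) = card Pairs"
proof -
  have eq: "{{e, f} | e f. e \<in> Q1 \<union> Q2 \<and> f \<in> Q1 \<union> Q2 \<and> e \<noteq> f \<and> e \<inter> f \<noteq> {}} = (\<lambda>(e,f). {e, f}) ` Pairs"
  proof
    show "{{e, f} | e f. e \<in> Q1 \<union> Q2 \<and> f \<in> Q1 \<union> Q2 \<and> e \<noteq> f \<and> e \<inter> f \<noteq> {}} \<subseteq> (\<lambda>(e,f). {e, f}) ` Pairs"
    proof
      fix x assume "x \<in> {{e, f} | e f. e \<in> Q1 \<union> Q2 \<and> f \<in> Q1 \<union> Q2 \<and> e \<noteq> f \<and> e \<inter> f \<noteq> {}}"
      then obtain e f where ef: "x = {e, f}" "e \<in> Q1 \<union> Q2" "f \<in> Q1 \<union> Q2" "e \<noteq> f" "e \<inter> f \<noteq> {}" by blast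
      have "\<not> (e \<in> Q1 \<and> f \<in> Q1)" using m1 ef unfolding matching_def by blast
      moreover have "\<not> (e \<in> Q2 \<and> f \<in> Q2)" using m2 ef unfolding matching_def by blast
      ultimately consider "e \<in> Q1" "f \<in> Q2" | "e \<in> Q2" "f \<in> Q1" using ef by blast
      then show "x \<in> (\<lambda>(e,f). {e, f}) ` Pairs"
      proof cases
        case 1
        then have "(e, f) \<in> Pairs" using ef unfolding Pairs_def by blast
        then show ?thesis using ef(1) by force
      next
        case 2
        then have "(f, e) \<in> Pairs" using ef unfolding Pairs_def by blast
        moreover have "x = {f, e}" using ef(1) by blast
        ultimately show ?thesis by force
      qed
    qed
  next
    show "(\<lambda>(e,f). {e, f}) ` Pairs \<subseteq> {{e, f} | e f. e \<in> Q1 \<union> Q2 \<and> f \<in> Q1 \<union> Q2 \<and> e \<noteq> f \<and> e \<inter> f \<noteq> {}}"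
    proof
      fix x assume "x \<in> (\<lambda>(e,f). {e, f}) ` Pairs"
      then obtain e f where ef: "(e, f) \<in> Pairs" "x = {e, f}" by auto
      show "x \<in> {{e, f} | e f. e \<in> Q1 \<union> Q2 \<and> f \<in> Q1 \<union> Q2 \<and> e \<noteq> f \<and> e \<inter> f \<noteq> {}}"
        unfolding mem_Collect_eq by (rule exI[of _ e], rule exI[of _ f]) (use ef in \<open>auto simp: Pairs_def\<close>)
    qed
  qed
  have inj: "inj_on (\<lambda>(e,f). {e, f}) Pairs"
  proof (rule inj_onI)
    fix x y assume x: "x \<in> Pairs" and y: "y \<in> Pairs" and xy: "(\<lambda>(e,f). {e, f}) x = (\<lambda>(e,f). {e, f}) y"
    obtain e f where ef: "x = (e, f)" "e \<in> Q1" "f \<in> Q2" "e \<noteq> f" "e \<inter> f \<noteq> {}" using x unfolding Pairs_def by blast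
    obtain e' f' where ef': "y = (e', f')" "e' \<in> Q1" "f' \<in> Q2" "e' \<noteq> f'" "e' \<inter> f' \<noteq> {}" using y unfolding Pairs_def by blast
    have "{e, f} = {e', f'}" using xy ef(1) ef'(1) by simp
    then consider "e = e'" "f = f'" | "e = f'" "f = e'" by (metis doubleton_eq_iff)
    then show "x = y"
    proof cases
      case 1 then show ?thesis using ef ef' by simp
    next
      case 2
      then have "f \<in> Q1" using ef' by simp
      then have "e = f" using m1 ef unfolding matching_def by blast
      then show ?thesis using ef by simp
    qed
  qed
  show ?thesis unfolding A_count_def eq using card_image[OF inj] .
qed

abbreviation f3 :: "nat set \<times> nat \<Rightarrow> (nat \<Rightarrow>\<^sub>0 nat)" where
  "f3 \<equiv> (\<lambda>(e,k). sqf e + Poly_Mapping.single k 1)"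

lemma f3_inj:
  assumes "matching Q" "\<forall>e\<in>Q. card e = 2"
  shows "inj_on f3 (Q \<times> {1..n})"
proof (rule inj_onI)
  fix x y assume x: "x \<in> Q \<times> {1..n}" and y: "y \<in> Q \<times> {1..n}" and xy: "f3 x = f3 y"
  obtain e k where ek: "x = (e, k)" "e \<in> Q" using x by blast
  obtain e' k' where ek': "y = (e', k')" "e' \<in> Q" using y by blast
  have c: "card e = 2" "card e' = 2" using assms(2) ek ek' by auto
  then have fe: "finite e" "finite e'" using card2_finite by auto
  have K: "insert k e = insert k' e'"
    using arg_cong[OF xy, of Poly_Mapping.keys] ek ek' fe by (simp add: keys_f3)
  have "e = e'"
    by (rule in_3set[OF assms(1) ek(2) ek'(2) c, of "insert k e"]) (use K fe c in \<open>auto simp: card_insert_if\<close>)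
  then have "Poly_Mapping.single k (1::nat) = Poly_Mapping.single k' 1" using xy ek ek' by simp
  then have "k = k'" by (metis keys_single one_neq_zero singleton_inject)
  then show "x = y" using ek ek' \<open>e = e'\<close> by simp
qed

lemma card_D3_1: "card (f3 ` (Q1 \<times> {1..n})) = card Q1 * n"
  using card_image[OF f3_inj[OF m1]] e1 fin1 by (simp add: card_cartesian_product)

lemma card_D3_2: "card (f3 ` (Q2 \<times> {1..n})) = card Q2 * n"
  using card_image[OF f3_inj[OF m2]] e2 fin2 by (simp add: card_cartesian_product)

abbreviation g2 :: "nat set \<times> nat set \<Rightarrow> (nat \<Rightarrow>\<^sub>0 nat)" where
  "g2 \<equiv> (\<lambda>(e,f). sqf (e \<union> f))"

lemma Pairs_facts:
  assumes "(e, f) \<in> Pairs"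
  shows "e \<in> Q1" "f \<in> Q2" "card (e \<union> f) = 3" "finite (e \<union> f)"
    "\<exists>k\<in>{1..n}. e \<union> f = insert k e \<and> k \<notin> e" "\<exists>k\<in>{1..n}. e \<union> f = insert k f \<and> k \<notin> f"
proof -
  have ef: "e \<in> Q1" "f \<in> Q2" "e \<noteq> f" "e \<inter> f \<noteq> {}" using assms unfolding Pairs_def by auto
  then obtain v where v: "v \<in> e" "v \<in> f" by blast
  have ce: "card e = 2" "finite e" "e \<subseteq> {1..n}" using e1 ef(1) by auto
  have cf: "card f = 2" "finite f" "f \<subseteq> {1..n}" using e2 ef(2) by auto
  obtain k where k: "f = {v, k}" "k \<notin> e" "e \<union> f = insert k e"
    using two_sets_share[OF ce(1) cf(1) ef(3) v] by blast
  obtain k' where k': "e = {v, k'}" "k' \<notin> f" "f \<union> e = insert k' f"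
    using two_sets_share[OF cf(1) ce(1) ef(3)[symmetric] v(2,1)] by blast
  show "e \<in> Q1" "f \<in> Q2" by fact+
  show "card (e \<union> f) = 3" using k ce by simp
  show "finite (e \<union> f)" using ce cf by simp
  show "\<exists>k\<in>{1..n}. e \<union> f = insert k e \<and> k \<notin> e" using k cf by auto
  show "\<exists>k\<in>{1..n}. e \<union> f = insert k f \<and> k \<notin> f" using k' ce by (auto simp: Un_commute)
qed

lemma D3_Int:
  "f3 ` (Q1 \<times> {1..n}) \<inter> f3 ` (Q2 \<times> {1..n}) = f3 ` ((Q1 \<inter> Q2) \<times> {1..n}) \<union> g2 ` Pairs"
proof
  show "f3 ` (Q1 \<times> {1..n}) \<inter> f3 ` (Q2 \<times> {1..n}) \<subseteq> f3 ` ((Q1 \<inter> Q2) \<times> {1..n}) \<union> g2 ` Pairs"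
  proof
    fix m assume "m \<in> f3 ` (Q1 \<times> {1..n}) \<inter> f3 ` (Q2 \<times> {1..n})"
    then obtain x y where xy: "x \<in> Q1 \<times> {1..n}" "m = f3 x" "y \<in> Q2 \<times> {1..n}" "m = f3 y" by blast
    obtain e1' k where x: "x = (e1', k)" by (cases x)
    obtain e2' l where y: "y = (e2', l)" by (cases y)
    have A: "e1' \<in> Q1" "k \<in> {1..n}" "m = sqf e1' + Poly_Mapping.single k 1"
      "e2' \<in> Q2" "l \<in> {1..n}" "m = sqf e2' + Poly_Mapping.single l 1" using xy x y by auto
    show "m \<in> f3 ` ((Q1 \<inter> Q2) \<times> {1..n}) \<union> g2 ` Pairs"
    proof (cases "e1' = e2'")
      case True
      then have "(e1', k) \<in> (Q1 \<inter> Q2) \<times> {1..n}" using A by simp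
      then show ?thesis using A(3) by force
    next
      case False
      have c1: "card e1' = 2" "finite e1'" using e1 A(1) by auto
      have c2: "card e2' = 2" "finite e2'" using e2 A(4) by auto
      have "Poly_Mapping.keys m = insert k e1'" using A(3) c1 by simp
      moreover have "Poly_Mapping.keys m = insert l e2'" using A(6) c2 by simp
      ultimately have K: "insert k e1' = insert l e2'" by simp
      have sub: "e2' \<subseteq> insert k e1'" using K by blast
      have kn: "k \<notin> e1'"
      proof
        assume "k \<in> e1'"
        then have "e2' \<subseteq> e1'" using sub by blast
        then have "e2' = e1'" using c1 c2 by (metis card_subset_eq)
        then show False using False by simp
      qed
      have ke2: "k \<in> e2'"
      proof (rule ccontr)
        assume "k \<notin> e2'"
        then have "e2' \<subseteq> e1'" using sub by blast
        then have "e2' = e1'" using c1 c2 by (metis card_subset_eq)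
        then show False using False by simp
      qed
      have U: "e1' \<union> e2' = insert k e1'" using sub ke2 by blast
      have "e1' \<inter> e2' \<noteq> {}"
      proof
        assume "e1' \<inter> e2' = {}"
        then have "card (e1' \<union> e2') = 4" using c1 c2 by (simp add: card_Un_disjoint)
        moreover have "card (insert k e1') = 3" using kn c1 by simp
        ultimately show False using U by simp
      qed
      then have P: "(e1', e2') \<in> Pairs" unfolding Pairs_def using A(1,4) False by blast
      have "g2 (e1', e2') = m" using U A(3) sqf_insert[OF c1(2) kn] by simp
      then show ?thesis using P by blast
    qed
  qed
next
  show "f3 ` ((Q1 \<inter> Q2) \<times> {1..n}) \<union> g2 ` Pairs \<subseteq> f3 ` (Q1 \<times> {1..n}) \<inter> f3 ` (Q2 \<times> {1..n})"
  proof
    fix m assume "m \<in> f3 ` ((Q1 \<inter> Q2) \<times> {1..n}) \<union> g2 ` Pairs"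
    then consider "m \<in> f3 ` ((Q1 \<inter> Q2) \<times> {1..n})" | "m \<in> g2 ` Pairs" by blast
    then show "m \<in> f3 ` (Q1 \<times> {1..n}) \<inter> f3 ` (Q2 \<times> {1..n})"
    proof cases
      case 1 then show ?thesis by blast
    next
      case 2
      then obtain e f where ef: "(e, f) \<in> Pairs" "m = sqf (e \<union> f)" by force
      obtain k where k: "k \<in> {1..n}" "e \<union> f = insert k e" "k \<notin> e" using Pairs_facts(5)[OF ef(1)] by blast
      obtain k' where k': "k' \<in> {1..n}" "e \<union> f = insert k' f" "k' \<notin> f" using Pairs_facts(6)[OF ef(1)] by blast
      have fe: "finite e" "finite f" using e1 e2 Pairs_facts(1,2)[OF ef(1)] by auto
      have "m = f3 (e, k)" using ef(2) k sqf_insert[OF fe(1) k(3)] by simp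
      moreover have "m = f3 (f, k')" using ef(2) k' sqf_insert[OF fe(2) k'(3)] by simp
      ultimately show ?thesis using k k' Pairs_facts(1,2)[OF ef(1)] by blast
    qed
  qed
qed

lemma D3_disj: "f3 ` ((Q1 \<inter> Q2) \<times> {1..n}) \<inter> g2 ` Pairs = {}"
proof (rule ccontr)
  assume "f3 ` ((Q1 \<inter> Q2) \<times> {1..n}) \<inter> g2 ` Pairs \<noteq> {}"
  then obtain e k e' f' where A: "e \<in> Q1" "e \<in> Q2" "(e', f') \<in> Pairs" "sqf e + Poly_Mapping.single k 1 = sqf (e' \<union> f')"
    by force
  have ce: "card e = 2" "finite e" using e1 A(1) by auto
  have P: "e' \<in> Q1" "f' \<in> Q2" "card (e' \<union> f') = 3" "finite (e' \<union> f')" using Pairs_facts[OF A(3)] by auto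
  have K: "insert k e = e' \<union> f'"
    using arg_cong[OF A(4), of Poly_Mapping.keys] ce P by (simp add: keys_f3)
  have c': "card e' = 2" "card f' = 2" using e1 e2 P by auto
  have "e = e'" by (rule in_3set[OF m1 A(1) P(1) ce(1) c'(1), of "e' \<union> f'"]) (use K P in auto)
  moreover have "e = f'" by (rule in_3set[OF m2 A(2) P(2) ce(1) c'(2), of "e' \<union> f'"]) (use K P in auto)
  ultimately have "e' = f'" by simp
  then show False using A(3) unfolding Pairs_def by simp
qed

lemma g2_inj: "inj_on g2 Pairs"
proof (rule inj_onI)
  fix x y assume x: "x \<in> Pairs" and y: "y \<in> Pairs" and xy: "g2 x = g2 y"
  obtain e f where ef: "x = (e, f)" using prod.exhaust by blast
  obtain e' f' where ef': "y = (e', f')" using prod.exhaust by blast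
  have P: "e \<in> Q1" "f \<in> Q2" "card (e \<union> f) = 3" "finite (e \<union> f)" using Pairs_facts x ef by auto
  have P': "e' \<in> Q1" "f' \<in> Q2" "card (e' \<union> f') = 3" "finite (e' \<union> f')" using Pairs_facts y ef' by auto
  have U: "e \<union> f = e' \<union> f'" using arg_cong[OF xy, of Poly_Mapping.keys] ef ef' P P' by simp
  have c: "card e = 2" "card f = 2" "card e' = 2" "card f' = 2" using e1 e2 P P' by auto
  have "e = e'" by (rule in_3set[OF m1 P(1) P'(1) c(1) c(3), of "e \<union> f"]) (use U P in auto)
  moreover have "f = f'" by (rule in_3set[OF m2 P(2) P'(2) c(2) c(4), of "e \<union> f"]) (use U P in auto)
  ultimately show "x = y" using ef ef' by simp
qed

lemma card_D3_Int: "card (f3 ` (Q1 \<times> {1..n}) \<inter> f3 ` (Q2 \<times> {1..n})) = card (Q1 \<inter> Q2) * n + card Pairs"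
proof -
  have "inj_on f3 (Q1 \<times> {1..n})" using f3_inj[OF m1] e1 by blast
  then have i: "inj_on f3 ((Q1 \<inter> Q2) \<times> {1..n})" by (rule inj_on_subset) auto
  have "card (f3 ` ((Q1 \<inter> Q2) \<times> {1..n}) \<union> g2 ` Pairs) = card (f3 ` ((Q1 \<inter> Q2) \<times> {1..n})) + card (g2 ` Pairs)"
    using D3_disj fin1 finite_Pairs by (intro card_Un_disjoint) auto
  also have "\<dots> = card (Q1 \<inter> Q2) * n + card Pairs"
    using card_image[OF i] card_image[OF g2_inj] fin1 by (simp add: card_cartesian_product)
  finally show ?thesis using D3_Int by simp
qed

lemma MQ1: "MQ n Q1 = sqf ` Q1 \<union> f3 ` (Q1 \<times> {1..n})" using MQ_char[OF ok1] by simp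
lemma MQ2: "MQ n Q2 = sqf ` Q2 \<union> f3 ` (Q2 \<times> {1..n})" using MQ_char[OF ok2] by simp

lemma sqf_inj: "inj_on sqf {e. finite e}"
  by (rule inj_onI) (metis keys_sqf mem_Collect_eq)

lemma count_main:
  "card (symdiff (MQ n Q1) (MQ n Q2)) + 2 * card Pairs = (n + 1) * card (symdiff Q1 Q2)"
proof -
  let ?A = "sqf ` Q1" and ?B = "sqf ` Q2" and ?C = "f3 ` (Q1 \<times> {1..n})" and ?D = "f3 ` (Q2 \<times> {1..n})"
  have tdA: "\<And>m. m \<in> ?A \<union> ?B \<Longrightarrow> total_degree m = 2" using e1 e2 by auto
  have tdC: "\<And>m. m \<in> ?C \<union> ?D \<Longrightarrow> total_degree m = 3" using e1 e2 by (auto simp: td_add)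
  have "symdiff (MQ n Q1) (MQ n Q2) = symdiff ?A ?B \<union> symdiff ?C ?D"
  proof -
    have "?A \<inter> ?D = {}" by (rule disj_by_fun[of _ total_degree 2 _ 3]) (use tdA tdC in auto)
    moreover have "?B \<inter> ?C = {}" by (rule disj_by_fun[of _ total_degree 2 _ 3]) (use tdA tdC in auto)
    ultimately show ?thesis unfolding MQ1 MQ2 symdiff_def by blast
  qed
  moreover have "symdiff ?A ?B \<inter> symdiff ?C ?D = {}"
  proof (rule disj_by_fun[of _ total_degree 2 _ 3])
    fix m assume "m \<in> symdiff ?A ?B"
    then have "m \<in> ?A \<union> ?B" unfolding symdiff_def by blast
    then show "total_degree m = 2" by (rule tdA)
  next
    fix m assume "m \<in> symdiff ?C ?D"
    then have "m \<in> ?C \<union> ?D" unfolding symdiff_def by blast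
    then show "total_degree m = 3" by (rule tdC)
  qed simp
  moreover have fin: "finite ?A" "finite ?B" "finite ?C" "finite ?D" using fin1 fin2 by auto
  ultimately have 1: "card (symdiff (MQ n Q1) (MQ n Q2)) = card (symdiff ?A ?B) + card (symdiff ?C ?D)"
    unfolding symdiff_def by (simp add: card_Un_disjoint)
  have "Q1 \<union> Q2 \<subseteq> {e. finite e}" using e1 e2 by blast
  with sqf_inj have si: "inj_on sqf (Q1 \<union> Q2)" by (rule inj_on_subset)
  have "symdiff ?A ?B = sqf ` symdiff Q1 Q2"
  proof -
    have a: "sqf ` (Q1 - Q2) = sqf ` Q1 - sqf ` Q2" by (rule inj_on_image_set_diff[OF si]) auto
    have b: "sqf ` (Q2 - Q1) = sqf ` Q2 - sqf ` Q1" by (rule inj_on_image_set_diff[OF si]) auto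
    show ?thesis unfolding symdiff_def image_Un a b ..
  qed
  then have 2: "card (symdiff ?A ?B) = card (symdiff Q1 Q2)"
  proof -
    have "inj_on sqf (symdiff Q1 Q2)" using si by (rule inj_on_subset) (auto simp: symdiff_def)
    then show ?thesis unfolding \<open>symdiff ?A ?B = sqf ` symdiff Q1 Q2\<close> by (rule card_image)
  qed
  have 3: "card (symdiff ?C ?D) + 2 * card (?C \<inter> ?D) = card Q1 * n + card Q2 * n"
    using card_symdiff_aux[OF fin(3,4)] card_D3_1 card_D3_2 by simp
  have 4: "card (symdiff Q1 Q2) + 2 * card (Q1 \<inter> Q2) = card Q1 + card Q2"
    using card_symdiff_aux[OF fin1 fin2] .
  have 5: "card (?C \<inter> ?D) = card (Q1 \<inter> Q2) * n + card Pairs" by (rule card_D3_Int)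
  have "card (symdiff ?C ?D) + 2 * card Pairs = n * card (symdiff Q1 Q2)"
  proof -
    have "card (symdiff ?C ?D) + 2 * card Pairs + 2 * (card (Q1 \<inter> Q2) * n) = (card Q1 + card Q2) * n"
      using 3 5 by (simp add: algebra_simps)
    also have "\<dots> = (card (symdiff Q1 Q2) + 2 * card (Q1 \<inter> Q2)) * n" using 4 by simp
    finally show ?thesis by (simp add: algebra_simps)
  qed
  then show ?thesis using 1 2 by simp
qed

end

lemma card_le1_cases: "finite A \<Longrightarrow> card A \<le> 1 \<Longrightarrow> A = {} \<or> (\<exists>x. A = {x})"
proof -
  assume f: "finite A" and c: "card A \<le> 1"
  then consider "card A = 0" | "card A = 1" by linarith
  then show ?thesis
  proof cases
    case 1 then show ?thesis using f by simp
  next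
    case 2 then show ?thesis by (simp add: card_1_singleton_iff)
  qed
qed

lemma incidence_sum:
  assumes "finite V" "finite E" "\<forall>e\<in>E. e \<subseteq> V"
  shows "(\<Sum>v\<in>V. card {e\<in>E. v \<in> e}) = (\<Sum>e\<in>E. card e)"
proof -
  have "(\<Sum>v\<in>V. card {e\<in>E. v \<in> e}) = (\<Sum>v\<in>V. \<Sum>e\<in>E. if v \<in> e then 1 else 0)"
    using assms(2) by (simp add: sum.If_cases Int_def)
  also have "\<dots> = (\<Sum>e\<in>E. \<Sum>v\<in>V. if v \<in> e then 1 else 0)" by (rule sum.swap)
  also have "\<dots> = (\<Sum>e\<in>E. card {v\<in>V. v \<in> e})" using assms(1) by (simp add: sum.If_cases Int_def)
  also have "\<dots> = (\<Sum>e\<in>E. card e)"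
  proof (rule sum.cong)
    fix e assume "e \<in> E" then have "{v\<in>V. v \<in> e} = e" using assms(3) by blast
    then show "card {v\<in>V. v \<in> e} = card e" by simp
  qed simp
  finally show ?thesis .
qed

context mm
begin

definition d1 :: "nat \<Rightarrow> nat" where "d1 v = card {e\<in>Q1. v \<in> e}"
definition d2 :: "nat \<Rightarrow> nat" where "d2 v = card {e\<in>Q2. v \<in> e}"
definition cdeg :: "nat \<Rightarrow> nat" where "cdeg v = d1 v + d2 v"

definition Ends :: "nat set" where "Ends = {v\<in>{1..n}. cdeg v = 1}"
definition Mid :: "nat set" where "Mid = {v\<in>{1..n}. \<exists>e\<in>Q1. \<exists>f\<in>Q2. v \<in> e \<and> v \<in> f \<and> e \<noteq> f}"

lemma d1_le: "d1 v \<le> 1"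
proof -
  have "finite {e\<in>Q1. v \<in> e}" using fin1 by simp
  moreover have "\<forall>a\<in>{e\<in>Q1. v \<in> e}. \<forall>b\<in>{e\<in>Q1. v \<in> e}. a = b" using m1 unfolding matching_def by blast
  ultimately have "card {e\<in>Q1. v \<in> e} \<le> Suc 0" by (simp only: card_le_Suc0_iff_eq)
  then show ?thesis unfolding d1_def by simp
qed

lemma d2_le: "d2 v \<le> 1"
proof -
  have "finite {e\<in>Q2. v \<in> e}" using fin2 by simp
  moreover have "\<forall>a\<in>{e\<in>Q2. v \<in> e}. \<forall>b\<in>{e\<in>Q2. v \<in> e}. a = b" using m2 unfolding matching_def by blast
  ultimately have "card {e\<in>Q2. v \<in> e} \<le> Suc 0" by (simp only: card_le_Suc0_iff_eq)
  then show ?thesis unfolding d2_def by simp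
qed

lemma cdeg_le: "cdeg v \<le> 2" using d1_le[of v] d2_le[of v] unfolding cdeg_def by simp

lemma d1_cases: "{e\<in>Q1. v \<in> e} = {} \<or> (\<exists>e. {e'\<in>Q1. v \<in> e'} = {e})"
  using card_le1_cases[of "{e\<in>Q1. v \<in> e}"] d1_le fin1 unfolding d1_def by simp
lemma d2_cases: "{e\<in>Q2. v \<in> e} = {} \<or> (\<exists>e. {e'\<in>Q2. v \<in> e'} = {e})"
  using card_le1_cases[of "{e\<in>Q2. v \<in> e}"] d2_le fin2 unfolding d2_def by simp

lemma the1: "e \<in> Q1 \<Longrightarrow> v \<in> e \<Longrightarrow> (THE e'. e' \<in> Q1 \<and> v \<in> e') = e"
  by (rule the_equality) (use m1 in \<open>auto simp: matching_def\<close>)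
lemma the2: "e \<in> Q2 \<Longrightarrow> v \<in> e \<Longrightarrow> (THE e'. e' \<in> Q2 \<and> v \<in> e') = e"
  by (rule the_equality) (use m2 in \<open>auto simp: matching_def\<close>)

lemma card_Mid: "card Mid = card Pairs"
proof -
  define h where "h v = (THE e'. e' \<in> Q1 \<and> v \<in> e', THE e'. e' \<in> Q2 \<and> v \<in> e')" for v
  have "bij_betw h Mid Pairs"
  proof (rule bij_betw_imageI)
    show "inj_on h Mid"
    proof (rule inj_onI)
      fix v w assume v: "v \<in> Mid" and w: "w \<in> Mid" and hvw: "h v = h w"
      obtain e f where ef: "e \<in> Q1" "f \<in> Q2" "v \<in> e" "v \<in> f" "e \<noteq> f" using v unfolding Mid_def by blast
      obtain e' f' where ef': "e' \<in> Q1" "f' \<in> Q2" "w \<in> e'" "w \<in> f'" "e' \<noteq> f'" using w unfolding Mid_def by blast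
      have "h v = (e, f)" unfolding h_def using the1 the2 ef by simp
      moreover have "h w = (e', f')" unfolding h_def using the1 the2 ef' by simp
      ultimately have "e = e'" "f = f'" using hvw by auto
      have ce: "card e = 2" "card f = 2" using e1 e2 ef by auto
      obtain k where k: "f = {v, k}" "k \<notin> e" using two_sets_share[OF ce ef(5) ef(3,4)] by blast
      show "v = w" using ef' \<open>e = e'\<close> \<open>f = f'\<close> k by auto
    qed
  next
    show "h ` Mid = Pairs"
    proof
      show "h ` Mid \<subseteq> Pairs"
      proof
        fix x assume "x \<in> h ` Mid"
        then obtain v where v: "v \<in> Mid" "x = h v" by blast
        obtain e f where ef: "e \<in> Q1" "f \<in> Q2" "v \<in> e" "v \<in> f" "e \<noteq> f" using v unfolding Mid_def by blast
        have "h v = (e, f)" unfolding h_def using the1 the2 ef by simp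
        then show "x \<in> Pairs" using v ef unfolding Pairs_def by auto
      qed
    next
      show "Pairs \<subseteq> h ` Mid"
      proof
        fix x assume x: "x \<in> Pairs"
        then obtain e f where ef: "x = (e, f)" "e \<in> Q1" "f \<in> Q2" "e \<noteq> f" "e \<inter> f \<noteq> {}" unfolding Pairs_def by blast
        then obtain v where v: "v \<in> e" "v \<in> f" by blast
        have "v \<in> {1..n}" using e1[OF ef(2)] v by auto
        then have "v \<in> Mid" unfolding Mid_def using ef v by blast
        moreover have "h v = x" unfolding h_def using the1 the2 ef v by simp
        ultimately show "x \<in> h ` Mid" by blast
      qed
    qed
  qed
  then show ?thesis by (rule bij_betw_same_card)
qed

lemma local_count:
  assumes v: "v \<in> {1..n}"
  shows "card {e\<in>symdiff Q1 Q2. v \<in> e} = (if v \<in> Ends then 1 else 0) + (if v \<in> Mid then 2 else 0)"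
proof -
  have S: "{e\<in>symdiff Q1 Q2. v \<in> e} = ({e\<in>Q1. v \<in> e} - Q2) \<union> ({e\<in>Q2. v \<in> e} - Q1)"
    unfolding symdiff_def by blast
  consider "{e\<in>Q1. v \<in> e} = {}" | e where "{e'\<in>Q1. v \<in> e'} = {e}" using d1_cases by blast
  then show ?thesis
  proof cases
    case 1
    note A = this
    consider "{e\<in>Q2. v \<in> e} = {}" | f where "{e'\<in>Q2. v \<in> e'} = {f}" using d2_cases by blast
    then show ?thesis
    proof cases
      case 1
      have "cdeg v = 0" unfolding cdeg_def d1_def d2_def A 1 by simp
      moreover have "v \<notin> Mid" using A 1 unfolding Mid_def by blast
      moreover have X: "{e\<in>symdiff Q1 Q2. v \<in> e} = {}" unfolding S A 1 by simp
      ultimately show ?thesis unfolding X Ends_def by simp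
    next
      case 2
      then have "f \<notin> Q1" using A by blast
      then have X: "{e\<in>symdiff Q1 Q2. v \<in> e} = {f}" unfolding S A 2 by auto
      moreover have "cdeg v = 1" unfolding cdeg_def d1_def d2_def A 2 by simp
      moreover have "v \<notin> Mid" using A 2 unfolding Mid_def by blast
      ultimately show ?thesis using v unfolding X Ends_def by simp
    qed
  next
    case 2
    note A = this
    consider "{e\<in>Q2. v \<in> e} = {}" | f where "{e'\<in>Q2. v \<in> e'} = {f}" using d2_cases by blast
    then show ?thesis
    proof cases
      case 1
      then have "e \<notin> Q2" using A by blast
      then have X: "{e\<in>symdiff Q1 Q2. v \<in> e} = {e}" unfolding S A 1 by auto
      moreover have "cdeg v = 1" unfolding cdeg_def d1_def d2_def A 1 by simp
      moreover have "v \<notin> Mid" using A 1 unfolding Mid_def by blast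
      ultimately show ?thesis using v unfolding X Ends_def by simp
    next
      case 2
      have cd: "cdeg v = 2" unfolding cdeg_def d1_def d2_def A 2 by simp
      have eQ: "e \<in> Q1" using A by (metis (no_types, lifting) insertI1 mem_Collect_eq)
      have fQ: "f \<in> Q2" using 2 by (metis (no_types, lifting) insertI1 mem_Collect_eq)
      show ?thesis
      proof (cases "e = f")
        case True
        then have X: "{e\<in>symdiff Q1 Q2. v \<in> e} = {}" unfolding S A 2 using True eQ fQ by auto
        moreover have "v \<notin> Mid"
        proof
          assume "v \<in> Mid"
          then obtain e' f' where ef': "e' \<in> Q1" "f' \<in> Q2" "v \<in> e'" "v \<in> f'" "e' \<noteq> f'" unfolding Mid_def by blast
          have "e' \<in> {e\<in>Q1. v \<in> e}" "f' \<in> {e\<in>Q2. v \<in> e}" using ef' by auto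
          then have "e' = e" "f' = f" unfolding A 2 by auto
          then show False using ef' True by simp
        qed
        ultimately show ?thesis using cd unfolding X Ends_def by simp
      next
        case False
        then have "e \<notin> Q2" "f \<notin> Q1" using A 2 by blast+
        then have X: "{e\<in>symdiff Q1 Q2. v \<in> e} = {e, f}" unfolding S A 2 by auto
        moreover have "v \<in> e" "v \<in> f" using A 2 by (metis (no_types, lifting) insertI1 mem_Collect_eq)+
        then have "v \<in> Mid" using eQ fQ False v unfolding Mid_def by blast
        ultimately show ?thesis using cd False unfolding X Ends_def by simp
      qed
    qed
  qed
qed

lemma count_B2: "2 * card (symdiff Q1 Q2) = card Ends + 2 * card Mid"
proof -
  have fd: "finite (symdiff Q1 Q2)" using fin1 fin2 unfolding symdiff_def by simp
  have sub: "\<forall>e\<in>symdiff Q1 Q2. e \<subseteq> {1..n}" using e1 e2 unfolding symdiff_def by blast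
  have "(\<Sum>e\<in>symdiff Q1 Q2. card e) = (\<Sum>e\<in>symdiff Q1 Q2. 2)"
    using e1 e2 unfolding symdiff_def by (intro sum.cong) auto
  then have "2 * card (symdiff Q1 Q2) = (\<Sum>e\<in>symdiff Q1 Q2. card e)" by simp
  also have "\<dots> = (\<Sum>v\<in>{1..n}. card {e\<in>symdiff Q1 Q2. v \<in> e})"
    using incidence_sum[OF _ fd sub] by simp
  also have "\<dots> = (\<Sum>v\<in>{1..n}. (if v \<in> Ends then 1 else 0) + (if v \<in> Mid then 2 else 0))"
    using local_count by (intro sum.cong) auto
  also have "\<dots> = card ({1..n} \<inter> Ends) + 2 * card ({1..n} \<inter> Mid)"
    by (simp add: sum.distrib sum.If_cases)
  also have "{1..n} \<inter> Ends = Ends" unfolding Ends_def by blast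
  also have "{1..n} \<inter> Mid = Mid" unfolding Mid_def by blast
  finally show ?thesis .
qed

end

fun walk :: "(nat \<Rightarrow> nat \<Rightarrow> nat) \<Rightarrow> nat \<Rightarrow> nat \<Rightarrow> nat \<Rightarrow> nat" where
  "walk f a b 0 = a"
| "walk f a b (Suc 0) = b"
| "walk f a b (Suc (Suc k)) = f (walk f a b k) (walk f a b (Suc k))"

context mm
begin

abbreviation RR :: "(nat \<times> nat) set" where "RR \<equiv> adj_rel (Q1 \<union> Q2)"

definition orb :: "nat \<Rightarrow> nat set" where "orb i = {j\<in>{1..n}. (i, j) \<in> RR\<^sup>*}"

definition NB :: "nat \<Rightarrow> nat set" where "NB v = {u. {v, u} \<in> Q1 \<union> Q2}"

lemma R_iff: "(a, b) \<in> RR \<longleftrightarrow> {a, b} \<in> Q1 \<union> Q2"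
  unfolding adj_rel_def by simp

lemma G_edge: "e \<in> Q1 \<union> Q2 \<Longrightarrow> card e = 2 \<and> finite e \<and> e \<subseteq> {1..n}"
  using e1 e2 by blast

lemma R_in: "(a, b) \<in> RR \<Longrightarrow> a \<in> {1..n} \<and> b \<in> {1..n} \<and> a \<noteq> b"
proof -
  assume "(a, b) \<in> RR"
  then have g: "{a, b} \<in> Q1 \<union> Q2" by (simp add: R_iff)
  then have "card {a, b} = 2" "{a, b} \<subseteq> {1..n}" using G_edge by blast+
  moreover have "a \<noteq> b" using \<open>card {a, b} = 2\<close> by (cases "a = b") auto
  ultimately show ?thesis by auto
qed

lemma R_sym: "(a, b) \<in> RR \<Longrightarrow> (b, a) \<in> RR"
  by (simp add: R_iff insert_commute)

lemma rtr_sym: "(a, b) \<in> RR\<^sup>* \<Longrightarrow> (b, a) \<in> RR\<^sup>*"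
proof (induction rule: rtrancl_induct)
  case base then show ?case by simp
next
  case (step y z)
  then show ?case using R_sym by (meson converse_rtrancl_into_rtrancl)
qed

lemma orb_self: "i \<in> {1..n} \<Longrightarrow> i \<in> orb i"
  unfolding orb_def by simp

lemma orb_sub: "orb i \<subseteq> {1..n}" unfolding orb_def by auto

lemma finite_orb: "finite (orb i)" using orb_sub finite_subset by blast

lemma orb_eq: "j \<in> orb i \<Longrightarrow> orb j = orb i"
proof -
  assume "j \<in> orb i"
  then have ij: "(i, j) \<in> RR\<^sup>*" unfolding orb_def by simp
  then have ji: "(j, i) \<in> RR\<^sup>*" by (rule rtr_sym)
  show ?thesis unfolding orb_def using ij ji by (meson rtrancl_trans)
qed

lemma NB_iff: "u \<in> NB v \<longleftrightarrow> (v, u) \<in> RR" unfolding NB_def R_iff by simp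

lemma NB_sym: "u \<in> NB v \<Longrightarrow> v \<in> NB u" unfolding NB_def by (simp add: insert_commute)

lemma NB_ne: "u \<in> NB v \<Longrightarrow> u \<noteq> v" using R_in NB_iff by blast

lemma NB_sub: "NB v \<subseteq> {1..n}" using R_in NB_iff by blast

lemma finite_NB: "finite (NB v)" using NB_sub finite_subset by blast

lemma orb_closed: "v \<in> orb i \<Longrightarrow> u \<in> NB v \<Longrightarrow> u \<in> orb i"
proof -
  assume v: "v \<in> orb i" and u: "u \<in> NB v"
  then have "(v, u) \<in> RR" by (simp add: NB_iff)
  then have "u \<in> {1..n}" "(i, u) \<in> RR\<^sup>*" using v R_in unfolding orb_def by auto
  then show ?thesis unfolding orb_def by simp
qed

lemma orb_min:
  assumes "v \<in> orb i" "v \<in> S" "\<And>a b. a \<in> S \<Longrightarrow> (a, b) \<in> RR \<Longrightarrow> b \<in> S"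
  shows "orb i \<subseteq> S"
proof
  fix x assume "x \<in> orb i"
  then have "x \<in> orb v" using orb_eq[OF assms(1)] by simp
  then have "(v, x) \<in> RR\<^sup>*" unfolding orb_def by simp
  then show "x \<in> S"
    by (induction rule: rtrancl_induct) (use assms(2,3) in blast)+
qed

lemma edge_in_orb:
  assumes "v \<in> orb i" "e \<in> Q1 \<union> Q2" "v \<in> e"
  shows "e \<subseteq> orb i"
proof
  fix u assume "u \<in> e"
  show "u \<in> orb i"
  proof (cases "u = v")
    case True then show ?thesis using assms by simp
  next
    case False
    have "card e = 2" using G_edge assms(2) by blast
    then obtain a b where ab: "e = {a, b}" "a \<noteq> b" using card_2_iff by metis
    then have "e = {v, u}" using assms(3) \<open>u \<in> e\<close> False by auto
    then have "u \<in> NB v" using assms(2) unfolding NB_def by simp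
    then show ?thesis using orb_closed assms(1) by blast
  qed
qed

lemma NB_le_cdeg: "card (NB v) \<le> cdeg v"
proof -
  have inj: "inj_on (\<lambda>u. {v, u}) (NB v)" by (rule inj_onI) (auto simp: doubleton_eq_iff)
  have "(\<lambda>u. {v, u}) ` NB v \<subseteq> {e\<in>Q1. v \<in> e} \<union> {e\<in>Q2. v \<in> e}" unfolding NB_def by auto
  then have "card (NB v) \<le> card ({e\<in>Q1. v \<in> e} \<union> {e\<in>Q2. v \<in> e})"
    using card_inj_on_le[OF inj] fin1 fin2 by simp
  also have "\<dots> \<le> d1 v + d2 v" unfolding d1_def d2_def by (rule card_Un_le)
  finally show ?thesis unfolding cdeg_def .
qed

lemma spanning:
  assumes r: "r \<in> {1..n}"
  shows "card (orb r) \<le> card {e\<in>Q1 \<union> Q2. e \<subseteq> orb r} + 1"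
proof -
  let ?O = "orb r"
  define dist where "dist v = (LEAST k. (r, v) \<in> RR ^^ k)" for v
  have dist_in: "(r, v) \<in> RR ^^ dist v" if "(r, v) \<in> RR ^^ k" for v k
    unfolding dist_def using that by (rule LeastI)
  have dist_le: "dist v \<le> k" if "(r, v) \<in> RR ^^ k" for v k
    unfolding dist_def using that by (rule Least_le)
  have inO: "\<exists>k. (r, v) \<in> RR ^^ k" if "v \<in> ?O" for v
    using that unfolding orb_def by (auto simp: rtrancl_power)
  have par_ex: "\<exists>u. (r, u) \<in> RR ^^ (dist v - 1) \<and> (u, v) \<in> RR" and dpos: "dist v \<ge> 1"
    if vO: "v \<in> ?O - {r}" for v
  proof -
    obtain k where "(r, v) \<in> RR ^^ k" using inO vO by blast
    then have d: "(r, v) \<in> RR ^^ dist v" by (rule dist_in)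
    show "dist v \<ge> 1"
    proof (rule ccontr)
      assume "\<not> dist v \<ge> 1"
      then have "dist v = 0" by simp
      then show False using d vO by simp
    qed
    then obtain k' where k': "dist v = Suc k'" by (cases "dist v") auto
    then have "(r, v) \<in> RR ^^ k' O RR" using d by simp
    then show "\<exists>u. (r, u) \<in> RR ^^ (dist v - 1) \<and> (u, v) \<in> RR" using k' by auto
  qed
  define par where "par v = (SOME u. (r, u) \<in> RR ^^ (dist v - 1) \<and> (u, v) \<in> RR)" for v
  have par: "(r, par v) \<in> RR ^^ (dist v - 1)" "(par v, v) \<in> RR" if "v \<in> ?O - {r}" for v
    using someI_ex[OF par_ex[OF that]] unfolding par_def by auto
  have dpar: "dist (par v) = dist v - 1" if "v \<in> ?O - {r}" for v
  proof -
    have a: "dist (par v) \<le> dist v - 1" using dist_le par(1)[OF that] by blast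
    have "(r, par v) \<in> RR ^^ dist (par v)" using dist_in par(1)[OF that] by blast
    then have "(r, v) \<in> RR ^^ Suc (dist (par v))" using par(2)[OF that] by (rule relpow_Suc_I)
    then have "dist v \<le> Suc (dist (par v))" by (rule dist_le)
    then show ?thesis using a by linarith
  qed
  have parO: "par v \<in> ?O" if "v \<in> ?O - {r}" for v
  proof -
    have "(r, par v) \<in> RR\<^sup>*" using par(1)[OF that] by (rule relpow_imp_rtrancl)
    moreover have "par v \<in> {1..n}" using R_in par(2)[OF that] by blast
    ultimately show ?thesis unfolding orb_def by simp
  qed
  define f where "f v = {v, par v}" for v
  have fin_t: "finite {e\<in>Q1 \<union> Q2. e \<subseteq> ?O}" using fin1 fin2 by simp
  have maps: "f ` (?O - {r}) \<subseteq> {e\<in>Q1 \<union> Q2. e \<subseteq> ?O}"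
  proof
    fix x assume "x \<in> f ` (?O - {r})"
    then obtain v where v: "v \<in> ?O - {r}" "x = f v" by blast
    have "{par v, v} \<in> Q1 \<union> Q2" using par(2)[OF v(1)] by (simp add: R_iff)
    then have "x \<in> Q1 \<union> Q2" using v(2) unfolding f_def by (simp add: insert_commute)
    moreover have "x \<subseteq> ?O" using v parO unfolding f_def by auto
    ultimately show "x \<in> {e\<in>Q1 \<union> Q2. e \<subseteq> ?O}" by simp
  qed
  have inj: "inj_on f (?O - {r})"
  proof (rule inj_onI)
    fix v w assume v: "v \<in> ?O - {r}" and w: "w \<in> ?O - {r}" and fvw: "f v = f w"
    show "v = w"
    proof (rule ccontr)
      assume "v \<noteq> w"
      then have "v = par w" "w = par v" using fvw unfolding f_def by (auto simp: doubleton_eq_iff)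
      then have "dist v = dist w - 1" "dist w = dist v - 1" using dpar[OF v] dpar[OF w] by simp_all
      moreover have "dist v \<ge> 1" "dist w \<ge> 1" using dpos v w by auto
      ultimately show False by linarith
    qed
  qed
  have "card (?O - {r}) \<le> card {e\<in>Q1 \<union> Q2. e \<subseteq> ?O}"
    using card_inj_on_le[OF inj maps fin_t] .
  moreover have "card (?O - {r}) = card ?O - 1" using orb_self[OF r] finite_orb by simp
  ultimately show ?thesis by linarith
qed

lemma two_nb:
  assumes "card (NB x) = 2" "a \<in> NB x" "b \<in> NB x" "a \<noteq> b"
  shows "NB x = {a, b}"
proof -
  have "{a, b} \<subseteq> NB x" using assms by auto
  moreover have "card {a, b} = card (NB x)" using assms by simp
  ultimately show ?thesis using finite_NB by (metis card_subset_eq)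
qed

lemma ham:
  assumes r: "r \<in> {1..n}" and c3: "card (orb r) \<ge> 3" and deg2: "\<forall>v\<in>orb r. card (NB v) = 2"
  shows "cyclic_orbit Q1 Q2 (orb r)"
proof -
  let ?O = "orb r"
  have rO: "r \<in> ?O" using orb_self[OF r] .
  have ex2: "\<exists>c. c \<in> NB b \<and> c \<noteq> a" if "b \<in> ?O" for a b
  proof -
    have "card (NB b) = 2" using deg2 that by blast
    then obtain x y where "NB b = {x, y}" "x \<noteq> y" using card_2_iff by metis
    then show ?thesis by (cases "x = a") auto
  qed
  obtain v1 where v1: "v1 \<in> NB r" using ex2[OF rO, of r] by blast
  define nxt where "nxt a b = (SOME c. c \<in> NB b \<and> c \<noteq> a)" for a b
  define w where "w = walk nxt r v1"
  have w0: "w 0 = r" and w1: "w (Suc 0) = v1" unfolding w_def by simp_all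
  have wSS: "w (Suc (Suc k)) = nxt (w k) (w (Suc k))" for k unfolding w_def by simp
  have inv: "w k \<in> ?O \<and> w (Suc k) \<in> NB (w k)" for k
  proof (induction k)
    case 0 then show ?case using w0 w1 rO v1 by simp
  next
    case (Suc k)
    then have a: "w (Suc k) \<in> ?O" using orb_closed by blast
    have "w (Suc (Suc k)) \<in> NB (w (Suc k))"
      unfolding wSS nxt_def using someI_ex[OF ex2[OF a, of "w k"]] by blast
    then show ?case using a by simp
  qed
  have nb: "w (Suc (Suc k)) \<noteq> w k" for k
  proof -
    have a: "w (Suc k) \<in> ?O" using inv[of "Suc k"] by simp
    show ?thesis unfolding wSS nxt_def using someI_ex[OF ex2[OF a, of "w k"]] by blast
  qed
  have adj: "w (Suc k) \<noteq> w k" for k using inv[of k] NB_ne by blast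
  have Nw: "NB (w (Suc k)) = {w k, w (Suc (Suc k))}" for k
  proof (rule two_nb)
    show "card (NB (w (Suc k))) = 2" using deg2 inv[of "Suc k"] by blast
    show "w k \<in> NB (w (Suc k))" using inv[of k] NB_sym by blast
    show "w (Suc (Suc k)) \<in> NB (w (Suc k))" using inv[of "Suc k"] by simp
    show "w k \<noteq> w (Suc (Suc k))" using nb[of k] by simp
  qed
  have "\<not> inj w"
  proof
    assume "inj w"
    moreover have "range w \<subseteq> ?O" using inv by blast
    then have "finite (range w)" using finite_orb finite_subset by blast
    ultimately have "finite (UNIV :: nat set)" using finite_imageD by blast
    then show False by simp
  qed
  then obtain a b where ab: "a \<noteq> b" "w a = w b" unfolding inj_def by blast
  have "\<exists>j. \<exists>i<j. w i = w j"
  proof (cases "a < b")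
    case True then show ?thesis using ab by blast
  next
    case False then have "b < a" using ab(1) by simp
    then show ?thesis using ab by metis
  qed
  define j0 where "j0 = (LEAST j. \<exists>i<j. w i = w j)"
  have j0: "\<exists>i<j0. w i = w j0" unfolding j0_def by (rule LeastI_ex) fact
  have injj: "a = b" if "a < j0" "b < j0" "w a = w b" for a b
  proof (rule ccontr)
    assume ne: "a \<noteq> b"
    show False
    proof (cases "a < b")
      case True
      then have "\<exists>i<b. w i = w b" using that by blast
      then have "j0 \<le> b" unfolding j0_def by (rule Least_le)
      then show False using that by simp
    next
      case False
      then have "b < a" using ne by simp
      then have "\<exists>i<a. w i = w a" using that by metis
      then have "j0 \<le> a" unfolding j0_def by (rule Least_le)
      then show False using that by simp
    qed
  qed
  obtain i0 where i0: "i0 < j0" "w i0 = w j0" using j0 by blast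
  have i00: "i0 = 0"
  proof (rule ccontr)
    assume "i0 \<noteq> 0"
    then obtain i' where i': "i0 = Suc i'" by (cases i0) auto
    have "j0 \<noteq> Suc i0" using adj[of i0] i0(2) by auto
    moreover have "j0 \<noteq> Suc (Suc i0)" using nb[of i0] i0(2) by auto
    ultimately obtain p where p: "j0 = Suc p" "Suc i0 < p" using i0(1) by (cases j0) auto
    have "w p \<in> NB (w j0)" using inv[of p] NB_sym p(1) by blast
    also have "NB (w j0) = {w i', w (Suc i0)}" using Nw[of i'] i' i0(2) by simp
    finally consider "w p = w i'" | "w p = w (Suc i0)" by blast
    then show False
    proof cases
      case 1 then have "p = i'" using injj p i' by simp
      then show False using p i' by simp
    next
      case 2 then have "p = Suc i0" using injj p by simp
      then show False using p by simp
    qed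
  qed
  have wj0: "w j0 = r" using i0 i00 w0 by simp
  have j03: "j0 \<ge> 3"
  proof -
    have "j0 \<noteq> 0" using i0 by simp
    moreover have "j0 \<noteq> 1" using adj[of 0] wj0 w0 by auto
    moreover have "j0 \<noteq> 2" using nb[of 0] wj0 w0 by (auto simp: numeral_2_eq_2)
    ultimately show ?thesis by linarith
  qed
  define xs where "xs = map w [0..<j0]"
  have len: "length xs = j0" unfolding xs_def by simp
  have nth: "xs ! k = w k" if "k < j0" for k unfolding xs_def using that by simp
  have dist: "distinct xs" unfolding xs_def distinct_map
    by (auto simp: inj_on_def intro: injj)
  have setxs: "set xs = w ` {..<j0}" unfolding xs_def by auto
  have sub1: "set xs \<subseteq> ?O"
  proof
    fix x assume "x \<in> set xs"
    then obtain k where "x = w k" using setxs by blast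
    then show "x \<in> ?O" using inv[of k] by simp
  qed
  have sub2: "?O \<subseteq> set xs"
  proof (rule orb_min[OF rO])
    show "r \<in> set xs" using setxs wj0 i0 i00 by (metis lessThan_iff image_eqI)
  next
    fix a b assume a: "a \<in> set xs" and ab: "(a, b) \<in> RR"
    then obtain k where k: "k < j0" "a = w k" using setxs by blast
    have bN: "b \<in> NB (w k)" using ab k(2) by (simp add: NB_iff)
    show "b \<in> set xs"
    proof (cases k)
      case 0
      have "w (j0 - 1) \<in> NB (w j0)" using inv[of "j0 - 1"] NB_sym j03 by (metis Suc_diff_1 less_le_trans zero_less_numeral)
      then have x: "w (j0 - 1) \<in> NB (w 0)" using wj0 w0 by simp
      have y: "w 1 \<in> NB (w 0)" using inv[of 0] by simp
      have "w 1 \<noteq> w (j0 - 1)" using injj[of 1 "j0 - 1"] j03 by auto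
      then have "NB (w 0) = {w 1, w (j0 - 1)}" using two_nb x y deg2 inv[of 0] by blast
      then have "b = w 1 \<or> b = w (j0 - 1)" using bN 0 by simp
      then show ?thesis using setxs j03 by auto
    next
      case (Suc k')
      then have "b = w k' \<or> b = w (Suc k)" using bN Nw[of k'] by simp
      then show ?thesis
      proof
        assume "b = w k'" then show ?thesis using setxs k Suc by auto
      next
        assume b: "b = w (Suc k)"
        show ?thesis
        proof (cases "Suc k < j0")
          case True then show ?thesis using setxs b by auto
        next
          case False then have "Suc k = j0" using k by simp
          then have "b = w 0" using b wj0 w0 by simp
          then show ?thesis using setxs j03 by auto
        qed
      qed
    qed
  qed
  have edges: "\<forall>k<length xs. {xs ! k, xs ! ((k + 1) mod length xs)} \<in> Q1 \<union> Q2"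
  proof (intro allI impI)
    fix k assume k: "k < length xs"
    have e: "{w k, w (Suc k)} \<in> Q1 \<union> Q2" using inv[of k] unfolding NB_def by simp
    show "{xs ! k, xs ! ((k + 1) mod length xs)} \<in> Q1 \<union> Q2"
    proof (cases "Suc k < j0")
      case True then show ?thesis using e k len nth by simp
    next
      case False then have "Suc k = j0" using k len by simp
      then have "(k + 1) mod length xs = 0" using len by simp
      moreover have "xs ! 0 = w (Suc k)" using nth[of 0] j03 \<open>Suc k = j0\<close> wj0 w0 by simp
      ultimately show ?thesis using e k len nth by simp
    qed
  qed
  have "set xs = ?O" using sub1 sub2 by blast
  then show ?thesis unfolding cyclic_orbit_def using c3 dist edges by blast
qed

end

context mm
begin

lemma mt1: "e \<in> Q1 \<Longrightarrow> f \<in> Q1 \<Longrightarrow> e \<inter> f \<noteq> {} \<Longrightarrow> e = f"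
  using m1 unfolding matching_def by blast
lemma mt2: "e \<in> Q2 \<Longrightarrow> f \<in> Q2 \<Longrightarrow> e \<inter> f \<noteq> {} \<Longrightarrow> e = f"
  using m2 unfolding matching_def by blast

lemma d1_pos: "e \<in> Q1 \<Longrightarrow> v \<in> e \<Longrightarrow> d1 v = 1"
proof -
  assume "e \<in> Q1" "v \<in> e"
  then have "e \<in> {e\<in>Q1. v \<in> e}" by simp
  then have "{e\<in>Q1. v \<in> e} \<noteq> {}" by blast
  moreover have "finite {e\<in>Q1. v \<in> e}" using fin1 by simp
  ultimately have "card {e\<in>Q1. v \<in> e} \<ge> 1" by (simp add: Suc_le_eq card_gt_0_iff)
  then show ?thesis using d1_le[of v] unfolding d1_def by simp
qed

lemma d2_pos: "e \<in> Q2 \<Longrightarrow> v \<in> e \<Longrightarrow> d2 v = 1"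
proof -
  assume "e \<in> Q2" "v \<in> e"
  then have "e \<in> {e\<in>Q2. v \<in> e}" by simp
  then have "{e\<in>Q2. v \<in> e} \<noteq> {}" by blast
  moreover have "finite {e\<in>Q2. v \<in> e}" using fin2 by simp
  ultimately have "card {e\<in>Q2. v \<in> e} \<ge> 1" by (simp add: Suc_le_eq card_gt_0_iff)
  then show ?thesis using d2_le[of v] unfolding d2_def by simp
qed

lemma d1_ex: "d1 v = 1 \<Longrightarrow> \<exists>e\<in>Q1. v \<in> e"
  unfolding d1_def by (cases "{e\<in>Q1. v \<in> e} = {}") auto
lemma d2_ex: "d2 v = 1 \<Longrightarrow> \<exists>e\<in>Q2. v \<in> e"
  unfolding d2_def by (cases "{e\<in>Q2. v \<in> e} = {}") auto

lemma cdeg_pos_edge: "cdeg v \<ge> 1 \<Longrightarrow> \<exists>e\<in>Q1 \<union> Q2. v \<in> e"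
proof -
  assume "cdeg v \<ge> 1"
  then have "d1 v = 1 \<or> d2 v = 1" using d1_le[of v] d2_le[of v] unfolding cdeg_def by linarith
  then show ?thesis using d1_ex d2_ex by blast
qed

lemma sumdeg:
  assumes r: "r \<in> {1..n}"
  shows "(\<Sum>v\<in>orb r. cdeg v) = 2 * (card {e\<in>Q1. e \<subseteq> orb r} + card {e\<in>Q2. e \<subseteq> orb r})"
proof -
  let ?O = "orb r"
  have a: "(\<Sum>v\<in>?O. d1 v) = 2 * card {e\<in>Q1. e \<subseteq> ?O}"
  proof -
    have "(\<Sum>v\<in>?O. d1 v) = (\<Sum>v\<in>?O. card {e\<in>{e\<in>Q1. e \<subseteq> ?O}. v \<in> e})"
    proof (rule sum.cong)
      fix v assume v: "v \<in> ?O"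
      have "{e\<in>Q1. v \<in> e} = {e\<in>{e\<in>Q1. e \<subseteq> ?O}. v \<in> e}" using edge_in_orb[OF v] by blast
      then show "d1 v = card {e\<in>{e\<in>Q1. e \<subseteq> ?O}. v \<in> e}" unfolding d1_def by simp
    qed simp
    also have "\<dots> = (\<Sum>e\<in>{e\<in>Q1. e \<subseteq> ?O}. card e)"
      by (rule incidence_sum) (use finite_orb fin1 in auto)
    also have "\<dots> = (\<Sum>e\<in>{e\<in>Q1. e \<subseteq> ?O}. 2)" using e1 by (intro sum.cong) auto
    finally show ?thesis by simp
  qed
  have b: "(\<Sum>v\<in>?O. d2 v) = 2 * card {e\<in>Q2. e \<subseteq> ?O}"
  proof -
    have "(\<Sum>v\<in>?O. d2 v) = (\<Sum>v\<in>?O. card {e\<in>{e\<in>Q2. e \<subseteq> ?O}. v \<in> e})"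
    proof (rule sum.cong)
      fix v assume v: "v \<in> ?O"
      have "{e\<in>Q2. v \<in> e} = {e\<in>{e\<in>Q2. e \<subseteq> ?O}. v \<in> e}" using edge_in_orb[OF v] by blast
      then show "d2 v = card {e\<in>{e\<in>Q2. e \<subseteq> ?O}. v \<in> e}" unfolding d2_def by simp
    qed simp
    also have "\<dots> = (\<Sum>e\<in>{e\<in>Q2. e \<subseteq> ?O}. card e)"
      by (rule incidence_sum) (use finite_orb fin2 in auto)
    also have "\<dots> = (\<Sum>e\<in>{e\<in>Q2. e \<subseteq> ?O}. 2)" using e2 by (intro sum.cong) auto
    finally show ?thesis by simp
  qed
  show ?thesis unfolding cdeg_def sum.distrib a b by simp
qed

lemma cyclic_deg2:
  assumes r: "r \<in> {1..n}" and cyc: "cyclic_orbit Q1 Q2 (orb r)" and v: "v \<in> orb r"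
  shows "cdeg v = 2"
proof -
  from cyc consider "card (orb r) = 2" "orb r \<in> Q1 \<inter> Q2"
    | xs where "distinct xs" "set xs = orb r" "\<forall>k<length xs. {xs ! k, xs ! ((k + 1) mod length xs)} \<in> Q1 \<union> Q2"
        "card (orb r) \<ge> 3"
    unfolding cyclic_orbit_def by blast
  then show ?thesis
  proof cases
    case 1
    then have "d1 v = 1" "d2 v = 1" using d1_pos d2_pos v by auto
    then show ?thesis unfolding cdeg_def by simp
  next
    case 2
    define m where "m = length xs"
    have m3: "m \<ge> 3" using 2 distinct_card unfolding m_def by metis
    obtain k where k: "k < m" "v = xs ! k" using v 2(2) unfolding m_def by (metis in_set_conv_nth)
    define i where "i = (if Suc k = m then 0 else Suc k)"
    define j where "j = (if k = 0 then m - 1 else k - 1)"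
    have im: "i < m" "(k + 1) mod m = i" using k m3 unfolding i_def by auto
    have jm: "j < m" "(j + 1) mod m = k" using k m3 unfolding j_def by auto
    have ij: "i \<noteq> j" using k m3 unfolding i_def j_def by auto
    have "{v, xs ! i} \<in> Q1 \<union> Q2" using 2(3) k im unfolding m_def by metis
    then have a: "xs ! i \<in> NB v" unfolding NB_def by simp
    have "{xs ! j, v} \<in> Q1 \<union> Q2" using 2(3) k jm unfolding m_def by metis
    then have b: "xs ! j \<in> NB v" unfolding NB_def by (simp add: insert_commute)
    have "xs ! i \<noteq> xs ! j" using 2(1) im jm ij unfolding m_def by (simp add: nth_eq_iff_index_eq)
    then have "card {xs ! i, xs ! j} = 2" by simp
    moreover have "{xs ! i, xs ! j} \<subseteq> NB v" using a b by simp
    ultimately have "2 \<le> card (NB v)" using finite_NB by (metis card_mono)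
    then show ?thesis using NB_le_cdeg[of v] cdeg_le[of v] by linarith
  qed
qed

lemma orb_deg_pos:
  assumes r: "r \<in> {1..n}" and c2: "card (orb r) \<ge> 2" and v: "v \<in> orb r"
  shows "cdeg v \<ge> 1"
proof -
  obtain x where x: "x \<in> orb r" "x \<noteq> v"
  proof -
    have "card (orb r - {v}) = card (orb r) - 1" using v finite_orb by simp
    then have "card (orb r - {v}) \<noteq> 0" using c2 by linarith
    then have "orb r - {v} \<noteq> {}" by (metis card.empty)
    then show ?thesis using that by blast
  qed
  have "x \<in> orb v" using x(1) orb_eq[OF v] by simp
  then have "(v, x) \<in> RR\<^sup>*" unfolding orb_def by simp
  then obtain y where "(v, y) \<in> RR" using x(2) by (metis converse_rtranclE)
  then have e: "{v, y} \<in> Q1 \<union> Q2" by (simp add: R_iff)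
  show ?thesis
  proof (cases "{v, y} \<in> Q1")
    case True then have "d1 v = 1" using d1_pos by blast
    then show ?thesis unfolding cdeg_def by simp
  next
    case False then have "{v, y} \<in> Q2" using e by simp
    then have "d2 v = 1" using d2_pos by blast
    then show ?thesis unfolding cdeg_def by simp
  qed
qed

lemma orb_small:
  assumes r: "r \<in> {1..n}" and v: "v \<in> orb r" and c: "cdeg v \<ge> 1"
  shows "card (orb r) \<ge> 2"
proof -
  obtain e where e: "e \<in> Q1 \<union> Q2" "v \<in> e" using cdeg_pos_edge[OF c] by blast
  have "e \<subseteq> orb r" using edge_in_orb[OF v e] .
  then have "card e \<le> card (orb r)" using finite_orb by (rule card_mono[rotated])
  then show ?thesis using G_edge[OF e(1)] by simp
qed

lemma all2_cyclic:
  assumes r: "r \<in> {1..n}" and c2: "card (orb r) \<ge> 2" and all2: "\<forall>v\<in>orb r. cdeg v = 2"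
  shows "cyclic_orbit Q1 Q2 (orb r)"
proof (cases "card (orb r) = 2")
  case True
  have rO: "r \<in> orb r" using orb_self[OF r] .
  have "d1 r = 1" "d2 r = 1" using all2 rO d1_le[of r] d2_le[of r] unfolding cdeg_def by auto
  then obtain e f where ef: "e \<in> Q1" "r \<in> e" "f \<in> Q2" "r \<in> f" using d1_ex d2_ex by blast
  have "e \<subseteq> orb r" "f \<subseteq> orb r" using edge_in_orb[OF rO] ef by auto
  moreover have "card e = 2" "card f = 2" using e1 e2 ef by auto
  ultimately have "e = orb r" "f = orb r" using True finite_orb by (metis card_subset_eq)+
  then show ?thesis unfolding cyclic_orbit_def using True ef by auto
next
  case False
  then have c3: "card (orb r) \<ge> 3" using c2 by simp
  have "\<forall>v\<in>orb r. card (NB v) = 2"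
  proof
    fix v assume v: "v \<in> orb r"
    have "d1 v = 1" "d2 v = 1" using all2 v d1_le[of v] d2_le[of v] unfolding cdeg_def by auto
    then obtain e f where ef: "e \<in> Q1" "v \<in> e" "f \<in> Q2" "v \<in> f" using d1_ex d2_ex by blast
    have ne: "e \<noteq> f"
    proof
      assume "e = f"
      have "orb r \<subseteq> e"
      proof (rule orb_min[OF v ef(2)])
        fix a b assume a: "a \<in> e" and ab: "(a, b) \<in> RR"
        then have g: "{a, b} \<in> Q1 \<union> Q2" by (simp add: R_iff)
        have "{a, b} = e"
        proof (cases "{a, b} \<in> Q1")
          case True
          have "{a, b} \<inter> e \<noteq> {}" using a by blast
          then show ?thesis using mt1[OF True ef(1)] by simp
        next
          case False then have "{a, b} \<in> Q2" using g by simp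
          moreover have "{a, b} \<inter> f \<noteq> {}" using a \<open>e = f\<close> by blast
          ultimately show ?thesis using mt2 ef(3) \<open>e = f\<close> by simp
        qed
        then show "b \<in> e" by blast
      qed
      then have "card (orb r) \<le> card e" using e1 ef(1) by (metis card_mono)
      then show False using c3 e1 ef(1) by simp
    qed
    have ce: "card e = 2" "card f = 2" using e1 e2 ef by auto
    obtain k where k: "f = {v, k}" "k \<notin> e" using two_sets_share[OF ce ne ef(2,4)] by blast
    obtain k' where k': "e = {v, k'}" "k' \<notin> f" using two_sets_share[OF ce(2,1) ne[symmetric] ef(4,2)] by blast
    have "k \<in> NB v" "k' \<in> NB v" using k k' ef unfolding NB_def by auto
    moreover have "k \<noteq> k'" using k k' by auto
    ultimately have "2 \<le> card (NB v)" using finite_NB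
      by (metis card_2_iff card_mono empty_subsetI insert_subset)
    then show "card (NB v) = 2" using NB_le_cdeg[of v] all2 v by fastforce
  qed
  then show ?thesis using ham[OF r c3] by blast
qed

lemma orbit_count:
  assumes r: "r \<in> {1..n}"
  shows "card (Ends \<inter> orb r) = (if \<not> cyclic_orbit Q1 Q2 (orb r) \<and> 2 \<le> card (orb r) then 2 else 0)"
proof -
  let ?O = "orb r"
  have EO: "Ends \<inter> ?O = {v\<in>?O. cdeg v = 1}" unfolding Ends_def using orb_sub by blast
  show ?thesis
  proof (cases "card ?O \<ge> 2")
    case False
    then have X: "{v\<in>?O. cdeg v = 1} = {}" using orb_small[OF r] by fastforce
    show ?thesis unfolding EO X using False by simp
  next
    case c2: True
    show ?thesis
    proof (cases "cyclic_orbit Q1 Q2 ?O")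
      case True
      then have X: "{v\<in>?O. cdeg v = 1} = {}" using cyclic_deg2[OF r True] by fastforce
      show ?thesis unfolding EO X using True by simp
    next
      case ncyc: False
      have pos: "\<forall>v\<in>?O. cdeg v \<ge> 1" using orb_deg_pos[OF r c2] by blast
      obtain v1 where v1: "v1 \<in> ?O" "cdeg v1 = 1"
      proof -
        have "\<not> (\<forall>v\<in>?O. cdeg v = 2)" using all2_cyclic[OF r c2] ncyc by blast
        then obtain v where "v \<in> ?O" "cdeg v \<noteq> 2" by blast
        moreover then have "cdeg v = 1" using pos cdeg_le[of v] by fastforce
        ultimately show ?thesis using that by blast
      qed
      let ?K = "card {e\<in>Q1. e \<subseteq> ?O} + card {e\<in>Q2. e \<subseteq> ?O}"
      have S: "(\<Sum>v\<in>?O. cdeg v) = 2 * ?K" by (rule sumdeg[OF r])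
      have "card ?O \<le> card {e\<in>Q1 \<union> Q2. e \<subseteq> ?O} + 1" by (rule spanning[OF r])
      moreover have "card {e\<in>Q1 \<union> Q2. e \<subseteq> ?O} \<le> ?K"
      proof -
        have "{e\<in>Q1 \<union> Q2. e \<subseteq> ?O} = {e\<in>Q1. e \<subseteq> ?O} \<union> {e\<in>Q2. e \<subseteq> ?O}" by blast
        then show ?thesis by (simp add: card_Un_le)
      qed
      ultimately have low: "card ?O \<le> ?K + 1" by linarith
      have up: "(\<Sum>v\<in>?O. cdeg v) \<le> 2 * card ?O - 1"
      proof -
        have "(\<Sum>v\<in>?O. cdeg v) = cdeg v1 + (\<Sum>v\<in>?O - {v1}. cdeg v)"
          using v1(1) finite_orb by (simp add: sum.remove)
        also have "(\<Sum>v\<in>?O - {v1}. cdeg v) \<le> (\<Sum>v\<in>?O - {v1}. 2)" using cdeg_le by (intro sum_mono) auto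
        also have "\<dots> = 2 * (card ?O - 1)" using v1(1) finite_orb by simp
        finally show ?thesis using v1(2) c2 by linarith
      qed
      have E: "(\<Sum>v\<in>?O. cdeg v) + card {v\<in>?O. cdeg v = 1} = 2 * card ?O"
      proof -
        have "(\<Sum>v\<in>?O. cdeg v) + card {v\<in>?O. cdeg v = 1} = (\<Sum>v\<in>?O. cdeg v + (if cdeg v = 1 then 1 else 0))"
          using finite_orb by (simp add: sum.distrib sum.If_cases Int_def)
        also have "\<dots> = (\<Sum>v\<in>?O. 2)"
        proof (rule sum.cong)
          fix v assume "v \<in> ?O"
          then have "cdeg v = 1 \<or> cdeg v = 2" using pos cdeg_le[of v] by fastforce
          then show "cdeg v + (if cdeg v = 1 then 1 else 0) = 2" by auto
        qed simp
        finally show ?thesis by simp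
      qed
      have ar: "\<forall>s k c e. s = 2*k \<longrightarrow> c \<le> k + 1 \<longrightarrow> s \<le> 2*c - 1 \<longrightarrow> s + e = 2*c \<longrightarrow> 2 \<le> c \<longrightarrow> e = (2::nat)"
        by presburger
      have X: "card {v\<in>?O. cdeg v = 1} = 2" using ar S low up E c2 by blast
      show ?thesis unfolding EO X using ncyc c2 by simp
    qed
  qed
qed

lemma orbits_eq: "orbits n Q1 Q2 = orb ` {1..n}"
  unfolding orbits_def orb_def by auto

lemma finite_orbits: "finite (orbits n Q1 Q2)" unfolding orbits_eq by simp

lemma orbits_disj: "O1 \<in> orbits n Q1 Q2 \<Longrightarrow> O2 \<in> orbits n Q1 Q2 \<Longrightarrow> O1 \<noteq> O2 \<Longrightarrow> O1 \<inter> O2 = {}"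
proof -
  assume a: "O1 \<in> orbits n Q1 Q2" "O2 \<in> orbits n Q1 Q2" "O1 \<noteq> O2"
  obtain r1 r2 where r: "O1 = orb r1" "O2 = orb r2" using a unfolding orbits_eq by blast
  show ?thesis
  proof (rule ccontr)
    assume "O1 \<inter> O2 \<noteq> {}"
    then obtain x where "x \<in> orb r1" "x \<in> orb r2" using r by blast
    then have "orb r1 = orb r2" using orb_eq by metis
    then show False using a r by simp
  qed
qed

lemma Ends_orbits: "card Ends = 2 * card {Ob\<in>orbits n Q1 Q2. \<not> cyclic_orbit Q1 Q2 Ob \<and> 2 \<le> card Ob}"
proof -
  have U: "Ends = (\<Union>Ob\<in>orbits n Q1 Q2. Ends \<inter> Ob)"
  proof
    show "Ends \<subseteq> (\<Union>Ob\<in>orbits n Q1 Q2. Ends \<inter> Ob)"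
    proof
      fix v assume v: "v \<in> Ends"
      then have "v \<in> {1..n}" unfolding Ends_def by simp
      then have "v \<in> orb v" "orb v \<in> orbits n Q1 Q2" using orb_self unfolding orbits_eq by auto
      then show "v \<in> (\<Union>Ob\<in>orbits n Q1 Q2. Ends \<inter> Ob)" using v by blast
    qed
  qed blast
  have "card Ends = (\<Sum>Ob\<in>orbits n Q1 Q2. card (Ends \<inter> Ob))"
    by (subst U, rule card_UN_disjoint) (use finite_orbits finite_orb orbits_disj orbits_eq in auto)
  also have "\<dots> = (\<Sum>Ob\<in>orbits n Q1 Q2. if \<not> cyclic_orbit Q1 Q2 Ob \<and> 2 \<le> card Ob then 2 else 0)"
  proof (rule sum.cong)
    fix Ob assume "Ob \<in> orbits n Q1 Q2"
    then obtain r where "r \<in> {1..n}" "Ob = orb r" unfolding orbits_eq by blast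
    then show "card (Ends \<inter> Ob) = (if \<not> cyclic_orbit Q1 Q2 Ob \<and> 2 \<le> card Ob then 2 else 0)"
      using orbit_count by simp
  qed simp
  also have "\<dots> = 2 * card {Ob\<in>orbits n Q1 Q2. \<not> cyclic_orbit Q1 Q2 Ob \<and> 2 \<le> card Ob}"
    using finite_orbits by (simp add: sum.If_cases Int_def)
  finally show ?thesis .
qed

lemma Lambda_eq: "Lambda_ge n Q1 Q2 2 = card {Ob\<in>orbits n Q1 Q2. \<not> cyclic_orbit Q1 Q2 Ob \<and> 2 \<le> card Ob}"
proof -
  let ?A = "\<lambda>m. {Ob \<in> orbits n Q1 Q2. card Ob = m \<and> \<not> cyclic_orbit Q1 Q2 Ob}"
  have cardle: "card Ob \<le> n" if ob: "Ob \<in> orbits n Q1 Q2" for Ob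
  proof -
    obtain r where "Ob = orb r" using ob unfolding orbits_eq by blast
    then have "Ob \<subseteq> {1..n}" using orb_sub by simp
    then have "card Ob \<le> card {1..n}" by (rule card_mono[rotated]) simp
    then show ?thesis by simp
  qed
  have U: "{Ob\<in>orbits n Q1 Q2. \<not> cyclic_orbit Q1 Q2 Ob \<and> 2 \<le> card Ob} = (\<Union>m\<in>{2..n}. ?A m)"
    using cardle by auto
  have "Lambda_ge n Q1 Q2 2 = (\<Sum>m\<in>{2..n}. card (?A m))"
    unfolding Lambda_ge_def Lambda_def ..
  also have "\<dots> = card (\<Union>m\<in>{2..n}. ?A m)"
    by (rule card_UN_disjoint[symmetric]) (use finite_orbits in auto)
  finally show ?thesis using U by simp
qed

lemma B_main: "A_count (Q1 \<union> Q2) + Lambda_ge n Q1 Q2 2 = card (symdiff Q1 Q2)"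
  using count_B2 card_Mid A_count_Pairs Ends_orbits Lambda_eq by linarith

end

theorem mainTheorem11:
  fixes n :: nat and Q1 Q2 :: "nat set set"
  assumes "n \<ge> 3"
    and "secondary_structure n Q1" and "secondary_structure n Q2"
  shows "d_m n 4 Q1 Q2 =
           real (card (symdiff Q1 Q2)) - 2 / real (n + 1) * real (A_count (Q1 \<union> Q2))
       \<and> d_m n 4 Q1 Q2 =
           real (card (symdiff Q1 Q2)) - 2 / real (n + 1) *
             (real (card (symdiff Q1 Q2)) - real (Lambda_ge n Q1 Q2 2))"
proof -
  have ok1: "edges_ok n Q1" and m1: "matching Q1"
    using assms(2) unfolding secondary_structure_def contact_structure_def edges_ok_def matching_def by auto
  have ok2: "edges_ok n Q2" and m2: "matching Q2"
    using assms(3) unfolding secondary_structure_def contact_structure_def edges_ok_def matching_def by auto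
  interpret mm n Q1 Q2 using ok1 ok2 m1 m2 by unfold_locales
  have ch: "(n + 4 - 3) choose n = n + 1" by simp
  have dp: "d'_m n 4 Q1 Q2 = real (card (symdiff (MQ n Q1) (MQ n Q2)))"
    by (rule dprime_formula[OF ok1 ok2 fin1 fin2])
  have cm: "real (card (symdiff (MQ n Q1) (MQ n Q2))) + 2 * real (A_count (Q1 \<union> Q2))
      = (real n + 1) * real (card (symdiff Q1 Q2))"
    using count_main A_count_Pairs by (metis (mono_tags, lifting) of_nat_add of_nat_mult of_nat_numeral of_nat_1 of_nat_Suc add.commute)
  have d: "d_m n 4 Q1 Q2 = real (card (symdiff (MQ n Q1) (MQ n Q2))) / (real n + 1)"
    unfolding d_m_def dp ch by simp
  have first: "d_m n 4 Q1 Q2 =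
           real (card (symdiff Q1 Q2)) - 2 / real (n + 1) * real (A_count (Q1 \<union> Q2))"
  proof -
    have "real (card (symdiff (MQ n Q1) (MQ n Q2))) = (real n + 1) * real (card (symdiff Q1 Q2)) - 2 * real (A_count (Q1 \<union> Q2))"
      using cm by linarith
    then show ?thesis unfolding d by (simp add: field_simps)
  qed
  have "real (A_count (Q1 \<union> Q2)) = real (card (symdiff Q1 Q2)) - real (Lambda_ge n Q1 Q2 2)"
    using B_main by (metis add_diff_cancel_right' of_nat_add)
  then show ?thesis using first by simp
qed

end
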